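(* Let $m_1,m_2\in\mathbb{N}$, $a>0$, and let $v$ be an $m_1\times m_2$ matrix function with locally integrable entries and $\operatorname{supp}(V)\subseteq[0,a]$. Let $z\in\mathbb{C}_+$ and $f\in\big[L^2((0,\infty))\big]^m$ with $\operatorname{supp}(f)\subseteq[0,a]$. Then $(L-zI)^{-1}f=Y(\cdot,z)$, where \[ Y(x,z)=w(x,z)\Big(g(z)+i\int_0^x w(t,z)^{-1}Jf(t)\,dt\Big),\qquad g(z)=\begin{bmatrix}0_{m_1\times 1}\\ -i\begin{bmatrix}0_{m_2\times m_1}& I_{m_2}\end{bmatrix}\int_0^a w(t,z)^{-1}Jf(t)\,dt\end{bmatrix}. \]
   Context: $m=m_1+m_2$, $J=\begin{bmatrix}I_{m_1}&0\\0&-I_{m_2}\end{bmatrix}$, $V=\begin{bmatrix}0_{m_1}&v\\ v^*&0_{m_2}\end{bmatrix}$; Dirac-type system $y'(x,z)=i(zJ+JV(x))y(x,z)$, $x\ge0$. $u(x,z)$ is its $m\times m$ fundamental solution with $u(0,z)=I_m$; $\varphi(z)$ is its Weyl–Titchmarsh function, i.e., the unique $m_2\times m_1$ matrix function holomorphic in $\mathbb{C}_+$ with $u(\cdot,z)\begin{bmatrix}I_{m_1}\\ \varphi(z)\end{bmatrix}$ having entries in $L^2((0,\infty))$. Set $Q(z)=\begin{bmatrix}I_{m_1}&0\\ \varphi(z)&I_{m_2}\end{bmatrix}$ and $w(x,z)=u(x,z)Q(z)$. $L$ is the operator in $\big[L^2((0,\infty))\big]^m$ generated by the differential expression $\mathcal{L}=-iJ\frac{d}{dx}-V(x)$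 on functions $Y$ satisfying the boundary condition $\begin{bmatrix}I_{m_1}&0_{m_1\times m_2}\end{bmatrix}Y(0)=0$. *)

theory Defs
  imports "HOL-Analysis.Analysis" "HOL-Complex_Analysis.Complex_Analysis"
begin

text \<open>The index set of size m = m1 + m2 is the sum type 'm1 + 'm2
  (Inl indices = first m1 coordinates, Inr indices = last m2 coordinates).
  Vectors in C^m are complex^('m1+'m2), m x m matrices are complex^('m1+'m2)^('m1+'m2),
  the m1 x m2 block v(x) is complex^'m2^'m1 (row index 'm1, column index 'm2),
  the m2 x m1 Weyl function phi(z) is complex^'m1^'m2.\<close>

definition Jmat :: "complex ^ ('m1::finite + 'm2::finite) ^ ('m1 + 'm2)" where
  "Jmat = (\<chi> i j. if i = j then (case i of Inl _ \<Rightarrow> 1 | Inr _ \<Rightarrow> -1) else 0)"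

definition Vmat :: "complex ^ 'm2 ^ 'm1 \<Rightarrow> complex ^ ('m1::finite + 'm2::finite) ^ ('m1 + 'm2)" where
  "Vmat B = (\<chi> i j. case (i, j) of
       (Inl p, Inr q) \<Rightarrow> B $ p $ q
     | (Inr q, Inl p) \<Rightarrow> cnj (B $ p $ q)
     | _ \<Rightarrow> 0)"

definition Qmat :: "complex ^ 'm1 ^ 'm2 \<Rightarrow> complex ^ ('m1::finite + 'm2::finite) ^ ('m1 + 'm2)" where
  "Qmat P = (\<chi> i j. case (i, j) of
       (Inr q, Inl p) \<Rightarrow> P $ q $ p
     | _ \<Rightarrow> (if i = j then 1 else 0))"

definition IPhi :: "complex ^ 'm1 ^ 'm2 \<Rightarrow> complex ^ 'm1 ^ ('m1::finite + 'm2::finite)" where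
  "IPhi P = (\<chi> i p. case i of Inl p' \<Rightarrow> (if p' = p then 1 else 0) | Inr q \<Rightarrow> P $ q $ p)"

definition Dcoef :: "(real \<Rightarrow> complex ^ 'm2 ^ 'm1) \<Rightarrow> complex \<Rightarrow> real
    \<Rightarrow> complex ^ ('m1::finite + 'm2::finite) ^ ('m1 + 'm2)" where
  "Dcoef v z x = mat \<i> ** (mat z ** Jmat + Jmat ** Vmat (v x))"

text \<open>u is the m x m fundamental solution of y' = i(zJ + JV)y normalized by u(0,z) = I_m,
  i.e. u(.,z) is the (locally absolutely continuous) solution of the integral equation
  u(x,z) = I_m + int_0^x i(zJ + JV(t)) u(t,z) dt, x >= 0.\<close>
definition fund_sol :: "(real \<Rightarrow> complex ^ 'm2 ^ 'm1) \<Rightarrow> (real \<Rightarrow> complex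
    \<Rightarrow> complex ^ ('m1::finite + 'm2::finite) ^ ('m1 + 'm2)) \<Rightarrow> bool" where
  "fund_sol v u \<longleftrightarrow> (\<forall>z x. x \<ge> 0 \<longrightarrow>
      ((\<lambda>t. Dcoef v z t ** u t z) has_integral (u x z - mat 1)) {0..x})"

definition L2_on :: "real set \<Rightarrow> (real \<Rightarrow> 'a::euclidean_space) \<Rightarrow> bool" where
  "L2_on S f \<longleftrightarrow> set_borel_measurable lborel S f \<and> set_integrable lborel S (\<lambda>x. (norm (f x))\<^sup>2)"

definition weyl_fun :: "(real \<Rightarrow> complex \<Rightarrow> complex ^ ('m1::finite + 'm2::finite) ^ ('m1 + 'm2))
    \<Rightarrow> (complex \<Rightarrow> complex ^ 'm1 ^ 'm2) \<Rightarrow> bool" where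
  "weyl_fun u \<phi> \<longleftrightarrow>
     (\<forall>q p. (\<lambda>z. \<phi> z $ q $ p) holomorphic_on {z. Im z > 0}) \<and>
     (\<forall>z. Im z > 0 \<longrightarrow> L2_on {0<..} (\<lambda>x. u x z ** IPhi (\<phi> z)))"

text \<open>The differential expression  (calL Y)(x) = -i J Y'(x) - V(x) Y(x), where DY is the
  (a.e.) derivative of the locally absolutely continuous function Y.\<close>
definition Lexpr :: "(real \<Rightarrow> complex ^ 'm2 ^ 'm1) \<Rightarrow> (real \<Rightarrow> complex ^ ('m1::finite + 'm2::finite))
    \<Rightarrow> (real \<Rightarrow> complex ^ ('m1 + 'm2)) \<Rightarrow> real \<Rightarrow> complex ^ ('m1 + 'm2)" where
  "Lexpr v Y DY x = (- \<i>) *s (Jmat *v DY x) - Vmat (v x) *v Y x"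

text \<open>Y belongs to the domain of L, with DY a derivative of Y: Y in L^2(0,oo), Y locally
  absolutely continuous on [0,oo) (Y(x) = Y(0) + int_0^x DY with DY locally integrable),
  calL Y in L^2(0,oo), and the boundary condition [I_{m1} 0] Y(0) = 0.\<close>
definition L_dom :: "(real \<Rightarrow> complex ^ 'm2 ^ 'm1) \<Rightarrow> (real \<Rightarrow> complex ^ ('m1::finite + 'm2::finite))
    \<Rightarrow> (real \<Rightarrow> complex ^ ('m1 + 'm2)) \<Rightarrow> bool" where
  "L_dom v Y DY \<longleftrightarrow>
     L2_on {0<..} Y \<and>
     (\<forall>b\<ge>0. set_integrable lborel {0..b} DY) \<and>
     (\<forall>x\<ge>0. (DY has_integral (Y x - Y 0)) {0..x}) \<and>
     L2_on {0<..} (Lexpr v Y DY) \<and>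
     (\<forall>p. Y 0 $ Inl p = 0)"

definition L_resolvent_eq :: "(real \<Rightarrow> complex ^ 'm2 ^ 'm1) \<Rightarrow> complex
    \<Rightarrow> (real \<Rightarrow> complex ^ ('m1::finite + 'm2::finite)) \<Rightarrow> (real \<Rightarrow> complex ^ ('m1 + 'm2)) \<Rightarrow> bool" where
  "L_resolvent_eq v z f Y \<longleftrightarrow>
     (\<exists>DY. L_dom v Y DY \<and> (AE x in lborel. x > 0 \<longrightarrow> Lexpr v Y DY x - z *s Y x = f x))"

definition wfun :: "(real \<Rightarrow> complex \<Rightarrow> complex ^ ('m1::finite + 'm2::finite) ^ ('m1 + 'm2))
    \<Rightarrow> (complex \<Rightarrow> complex ^ 'm1 ^ 'm2) \<Rightarrow> real \<Rightarrow> complex \<Rightarrow> complex ^ ('m1 + 'm2) ^ ('m1 + 'm2)" where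
  "wfun u \<phi> x z = u x z ** Qmat (\<phi> z)"

definition Wint :: "(real \<Rightarrow> complex \<Rightarrow> complex ^ ('m1::finite + 'm2::finite) ^ ('m1 + 'm2))
    \<Rightarrow> (complex \<Rightarrow> complex ^ 'm1 ^ 'm2) \<Rightarrow> (real \<Rightarrow> complex ^ ('m1 + 'm2)) \<Rightarrow> complex \<Rightarrow> real
    \<Rightarrow> complex ^ ('m1 + 'm2)" where
  "Wint u \<phi> f z x = integral {0..x} (\<lambda>t. matrix_inv (wfun u \<phi> t z) *v (Jmat *v f t))"

definition gvec :: "(real \<Rightarrow> complex \<Rightarrow> complex ^ ('m1::finite + 'm2::finite) ^ ('m1 + 'm2))
    \<Rightarrow> (complex \<Rightarrow> complex ^ 'm1 ^ 'm2) \<Rightarrow> (real \<Rightarrow> complex ^ ('m1 + 'm2)) \<Rightarrow> real \<Rightarrow> complex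
    \<Rightarrow> complex ^ ('m1 + 'm2)" where
  "gvec u \<phi> f a z = (\<chi> i. case i of Inl _ \<Rightarrow> 0 | Inr q \<Rightarrow> - \<i> * Wint u \<phi> f z a $ Inr q)"

definition Ysol :: "(real \<Rightarrow> complex \<Rightarrow> complex ^ ('m1::finite + 'm2::finite) ^ ('m1 + 'm2))
    \<Rightarrow> (complex \<Rightarrow> complex ^ 'm1 ^ 'm2) \<Rightarrow> (real \<Rightarrow> complex ^ ('m1 + 'm2)) \<Rightarrow> real \<Rightarrow> real \<Rightarrow> complex
    \<Rightarrow> complex ^ ('m1 + 'm2)" where
  "Ysol u \<phi> f a x z = wfun u \<phi> x z *v (gvec u \<phi> f a z + \<i> *s Wint u \<phi> f z x)"

end

theory Submission
  imports Defs
begin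


lemma ibp_core:
  fixes h :: "'a::euclidean_space \<Rightarrow> 'b::euclidean_space \<Rightarrow> 'c::euclidean_space"
    and F' F :: "real \<Rightarrow> 'a" and G' G :: "real \<Rightarrow> 'b"
  assumes hb: "bounded_bilinear h"
    and iF: "set_integrable lborel {0..b} F'" and iG: "set_integrable lborel {0..b} G'"
    and eF: "\<And>x. x \<in> {0..b} \<Longrightarrow> F x = F 0 + (LINT t:{0..x}|lborel. F' t)"
    and eG: "\<And>x. x \<in> {0..b} \<Longrightarrow> G x = G 0 + (LINT t:{0..x}|lborel. G' t)"
    and b: "0 \<le> b"
  shows "set_integrable lborel {0..b} (\<lambda>t. h (F' t) (G t) + h (F t) (G' t))"
    and "(LINT t:{0..b}|lborel. h (F' t) (G t) + h (F t) (G' t)) = h (F b) (G b) - h (F 0) (G 0)"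
proof -
  interpret hb: bounded_bilinear h by (rule hb)
  define f1 where "f1 = (\<lambda>s. indicator {0..b} s *\<^sub>R F' s)"
  define g1 where "g1 = (\<lambda>s. indicator {0..b} s *\<^sub>R G' s)"
  have if1: "integrable lborel f1" using iF by (simp add: f1_def set_integrable_def)
  have ig1: "integrable lborel g1" using iG by (simp add: g1_def set_integrable_def)
  have mf1[measurable]: "f1 \<in> borel_measurable lborel" using if1 by (rule borel_measurable_integrable)
  have mg1[measurable]: "g1 \<in> borel_measurable lborel" using ig1 by (rule borel_measurable_integrable)
  have cont_h: "continuous_on UNIV (\<lambda>x. h (fst x) (snd x))"
    by (intro hb.continuous_on continuous_on_fst continuous_on_snd continuous_on_id)
  have hmeas: "(\<lambda>x. h (A x) (B x)) \<in> borel_measurable M" 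
    if "A \<in> borel_measurable M" "B \<in> borel_measurable M" for A B and M :: "'z measure"
    using borel_measurable_continuous_Pair[OF that cont_h] by simp
  define Q where "Q = (\<lambda>p. h (f1 (fst p)) (g1 (snd p)))"
  have Qm[measurable]: "Q \<in> borel_measurable (lborel \<Otimes>\<^sub>M lborel)"
    unfolding Q_def by (rule hmeas) measurable
  obtain K where K: "\<And>x y. norm (h x y) \<le> norm x * norm y * K" and Kpos: "K > 0"
    using hb.pos_bounded by blast
  have intQs: "integrable lborel (\<lambda>t. h c (g1 t))" for c
    by (rule integrable_bounded_linear[OF hb.bounded_linear_right ig1])
  have intQs': "integrable lborel (\<lambda>s. h (f1 s) c)" for c
    by (rule integrable_bounded_linear[OF hb.bounded_linear_left if1])
  have iQ: "integrable (lborel \<Otimes>\<^sub>M lborel) Q"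
  proof (rule lborel_pair.Fubini_integrable)
    show "Q \<in> borel_measurable (lborel \<Otimes>\<^sub>M lborel)" by (rule Qm)
    show "AE x in lborel. integrable lborel (\<lambda>y. Q (x, y))"
      by (simp add: Q_def intQs)
    show "integrable lborel (\<lambda>x. LINT y|lborel. norm (Q (x, y)))"
    proof (rule Bochner_Integration.integrable_bound)
      show "integrable lborel (\<lambda>s. norm (f1 s) * (K * (LINT t|lborel. norm (g1 t))))"
        by (intro integrable_mult_left integrable_norm if1)
      show "(\<lambda>x. LINT y|lborel. norm (Q (x, y))) \<in> borel_measurable lborel"
        by measurable
      show "AE x in lborel. norm (LINT y|lborel. norm (Q (x, y))) \<le> norm (norm (f1 x) * (K * (LINT t|lborel. norm (g1 t))))"
      proof (intro AE_I2)
        fix s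
        have "(LINT y|lborel. norm (Q (s, y))) \<le> (LINT y|lborel. norm (f1 s) * K * norm (g1 y))"
          apply (rule integral_mono)
          using intQs[of "f1 s"] apply (simp add: Q_def)
           using integrable_norm[OF ig1] apply simp
          using K by (simp add: Q_def mult.commute mult.left_commute)
        also have "\<dots> = norm (f1 s) * (K * (LINT t|lborel. norm (g1 t)))" by simp
        finally show "norm (LINT y|lborel. norm (Q (s, y))) \<le> norm (norm (f1 s) * (K * (LINT t|lborel. norm (g1 t))))"
          using Kpos by (simp add: integral_nonneg_AE abs_of_nonneg)
      qed
    qed
  qed
  define P1 where "P1 = (\<lambda>p. h (indicator {..snd p} (fst p) *\<^sub>R f1 (fst p)) (g1 (snd p)))"
  define P2 where "P2 = (\<lambda>p. h (f1 (fst p)) (indicator {..<fst p} (snd p) *\<^sub>R g1 (snd p)))"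
  have ind1: "(\<lambda>p::real\<times>real. indicator {..snd p} (fst p) :: real) \<in> borel_measurable (lborel \<Otimes>\<^sub>M lborel)"
    unfolding indicator_def of_bool_def atMost_iff lessThan_iff by measurable
  have ind2: "(\<lambda>p::real\<times>real. indicator {..<fst p} (snd p) :: real) \<in> borel_measurable (lborel \<Otimes>\<^sub>M lborel)"
    unfolding indicator_def of_bool_def atMost_iff lessThan_iff by measurable
  have P1m: "P1 \<in> borel_measurable (lborel \<Otimes>\<^sub>M lborel)"
    unfolding P1_def by (rule hmeas) (use ind1 in measurable)
  have P2m: "P2 \<in> borel_measurable (lborel \<Otimes>\<^sub>M lborel)"
    unfolding P2_def by (rule hmeas) (use ind2 in measurable)
  have QP: "Q p = P1 p + P2 p" for p
    by (cases "fst p \<le> snd p") (auto simp: Q_def P1_def P2_def hb.zero_left hb.zero_right)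
  have iP1: "integrable (lborel \<Otimes>\<^sub>M lborel) P1"
    by (rule Bochner_Integration.integrable_bound[OF iQ P1m])
       (auto simp: Q_def P1_def hb.zero_left indicator_def)
  have iP2: "integrable (lborel \<Otimes>\<^sub>M lborel) P2"
    by (rule Bochner_Integration.integrable_bound[OF iQ P2m])
       (auto simp: Q_def P2_def hb.zero_right indicator_def)
  have intF: "(LINT s|lborel. indicator {..t} s *\<^sub>R f1 s) = F t - F 0" if "t \<in> {0..b}" for t
  proof -
    have "(LINT s|lborel. indicator {..t} s *\<^sub>R f1 s) = (LINT s:{0..t}|lborel. F' s)"
      unfolding set_lebesgue_integral_def f1_def
      by (rule Bochner_Integration.integral_cong) (use that in \<open>auto simp: indicator_def\<close>)
    then show ?thesis using eF[OF that] by simp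
  qed
  have intG: "(LINT s|lborel. indicator {..t} s *\<^sub>R g1 s) = G t - G 0" if "t \<in> {0..b}" for t
  proof -
    have "(LINT s|lborel. indicator {..t} s *\<^sub>R g1 s) = (LINT s:{0..t}|lborel. G' s)"
      unfolding set_lebesgue_integral_def g1_def
      by (rule Bochner_Integration.integral_cong) (use that in \<open>auto simp: indicator_def\<close>)
    then show ?thesis using eG[OF that] by simp
  qed
  have intG': "(LINT s|lborel. indicator {..<t} s *\<^sub>R g1 s) = G t - G 0" if "t \<in> {0..b}" for t
  proof -
    have "(LINT s|lborel. indicator {..<t} s *\<^sub>R g1 s) = (LINT s|lborel. indicator {..t} s *\<^sub>R g1 s)"
      by (rule integral_cong_AE) (use AE_lborel_singleton[of t] in \<open>auto simp: indicator_def elim!: eventually_mono\<close>)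
    then show ?thesis using intG[OF that] by simp
  qed
  have f1out: "f1 s = 0" if "s \<notin> {0..b}" for s using that by (simp add: f1_def)
  have g1out: "g1 s = 0" if "s \<notin> {0..b}" for s using that by (simp add: g1_def)
  have inP1: "(LINT s|lborel. P1 (s, t)) = h (F t - F 0) (g1 t)" for t
  proof (cases "t \<in> {0..b}")
    case True
    have "(LINT s|lborel. P1 (s, t)) = h (LINT s|lborel. indicator {..t} s *\<^sub>R f1 s) (g1 t)"
      unfolding P1_def fst_conv snd_conv
      by (rule integral_bounded_linear[OF hb.bounded_linear_left integrable_mult_indicator]) (auto intro: if1)
    then show ?thesis using intF[OF True] by simp
  next
    case False then show ?thesis by (simp add: P1_def g1out hb.zero_right)
  qed
  have inP2: "(LINT t|lborel. P2 (s, t)) = h (f1 s) (G s - G 0)" for s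
  proof (cases "s \<in> {0..b}")
    case True
    have "(LINT t|lborel. P2 (s, t)) = h (f1 s) (LINT t|lborel. indicator {..<s} t *\<^sub>R g1 t)"
      unfolding P2_def fst_conv snd_conv
      by (rule integral_bounded_linear[OF hb.bounded_linear_right integrable_mult_indicator]) (auto intro: ig1)
    then show ?thesis using intG'[OF True] by simp
  next
    case False then show ?thesis by (simp add: P2_def f1out hb.zero_left)
  qed
  have inQ: "(LINT s|lborel. Q (s, t)) = h (F b - F 0) (g1 t)" for t
  proof -
    have "(LINT s|lborel. Q (s, t)) = h (LINT s|lborel. f1 s) (g1 t)"
      unfolding Q_def fst_conv snd_conv
      by (rule integral_bounded_linear[OF hb.bounded_linear_left if1])
    also have "(LINT s|lborel. f1 s) = F b - F 0"
      using eF[of b] b unfolding f1_def set_lebesgue_integral_def by simp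
    finally show ?thesis .
  qed
  have intg1: "(LINT t|lborel. g1 t) = G b - G 0"
      using eG[of b] b unfolding g1_def set_lebesgue_integral_def by simp
  have intf1: "(LINT t|lborel. f1 t) = F b - F 0"
      using eF[of b] b unfolding f1_def set_lebesgue_integral_def by simp
  have totQ: "integral\<^sup>L (lborel \<Otimes>\<^sub>M lborel) Q = h (F b - F 0) (G b - G 0)"
  proof -
    have "integral\<^sup>L (lborel \<Otimes>\<^sub>M lborel) Q = (LINT t|lborel. LINT s|lborel. Q (s, t))"
      using lborel_pair.integral_snd[of "\<lambda>s t. Q (s, t)"] iQ by simp
    also have "\<dots> = (LINT t|lborel. h (F b - F 0) (g1 t))" by (simp add: inQ)
    also have "\<dots> = h (F b - F 0) (LINT t|lborel. g1 t)"
      by (rule integral_bounded_linear[OF hb.bounded_linear_right ig1])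
    finally show ?thesis using intg1 by simp
  qed
  have iA: "integrable lborel (\<lambda>t. h (F t - F 0) (g1 t))"
    using lborel_pair.integrable_snd[of "\<lambda>s t. P1 (s, t)"] iP1 by (simp add: inP1)
  have vA: "(LINT t|lborel. h (F t - F 0) (g1 t)) = integral\<^sup>L (lborel \<Otimes>\<^sub>M lborel) P1"
    using lborel_pair.integral_snd[of "\<lambda>s t. P1 (s, t)"] iP1 by (simp add: inP1)
  have iB: "integrable lborel (\<lambda>s. h (f1 s) (G s - G 0))"
    using lborel_pair.integrable_fst[of "\<lambda>s t. P2 (s, t)"] iP2 by (simp add: inP2)
  have vB: "(LINT s|lborel. h (f1 s) (G s - G 0)) = integral\<^sup>L (lborel \<Otimes>\<^sub>M lborel) P2"
    using lborel_pair.integral_fst[of "\<lambda>s t. P2 (s, t)"] iP2 by (simp add: inP2)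
  have sumPQ: "integral\<^sup>L (lborel \<Otimes>\<^sub>M lborel) Q = integral\<^sup>L (lborel \<Otimes>\<^sub>M lborel) P1 + integral\<^sup>L (lborel \<Otimes>\<^sub>M lborel) P2"
    using Bochner_Integration.integral_add[OF iP1 iP2] QP by (simp add: fun_eq_iff[symmetric] QP[abs_def])
  have eqI: "indicator {0..b} t *\<^sub>R (h (F' t) (G t) + h (F t) (G' t)) =
      h (f1 t) (G t - G 0) + h (f1 t) (G 0) + (h (F t - F 0) (g1 t) + h (F 0) (g1 t))" for t
    by (simp add: f1_def g1_def hb.scaleR_left hb.scaleR_right hb.diff_left hb.diff_right scaleR_add_right scaleR_diff_right)
  have i1: "integrable lborel (\<lambda>t. h (f1 t) (G 0))" by (rule intQs')
  have i2: "integrable lborel (\<lambda>t. h (F 0) (g1 t))" by (rule intQs)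
  have v1: "(LINT t|lborel. h (f1 t) (G 0)) = h (F b - F 0) (G 0)"
    using integral_bounded_linear[OF hb.bounded_linear_left if1, of "G 0"] intf1 by simp
  have v2: "(LINT t|lborel. h (F 0) (g1 t)) = h (F 0) (G b - G 0)"
    using integral_bounded_linear[OF hb.bounded_linear_right ig1, of "F 0"] intg1 by simp
  show "set_integrable lborel {0..b} (\<lambda>t. h (F' t) (G t) + h (F t) (G' t))"
    unfolding set_integrable_def eqI
    by (intro Bochner_Integration.integrable_add iA iB i1 i2)
  have "(LINT t:{0..b}|lborel. h (F' t) (G t) + h (F t) (G' t)) =
     (LINT t|lborel. h (f1 t) (G t - G 0)) + (LINT t|lborel. h (f1 t) (G 0)) +
     ((LINT t|lborel. h (F t - F 0) (g1 t)) + (LINT t|lborel. h (F 0) (g1 t)))"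
    unfolding set_lebesgue_integral_def eqI
    by (simp add: Bochner_Integration.integral_add iA iB i1 i2)
  also have "\<dots> = h (F b - F 0) (G b - G 0) + h (F b - F 0) (G 0) + h (F 0) (G b - G 0)"
    using v1 v2 vA vB sumPQ totQ by (simp add: algebra_simps)
  also have "\<dots> = h (F b) (G b) - h (F 0) (G 0)"
    by (simp add: hb.diff_left hb.diff_right algebra_simps)
  finally show "(LINT t:{0..b}|lborel. h (F' t) (G t) + h (F t) (G' t)) = h (F b) (G b) - h (F 0) (G 0)" .
qed



definition jd :: "('m1::finite + 'm2::finite) \<Rightarrow> complex" where
  "jd i = (case i of Inl _ \<Rightarrow> 1 | Inr _ \<Rightarrow> -1)"

definition adjm :: "complex^'n^'m \<Rightarrow> complex^'m^'n" where
  "adjm M = (\<chi> i j. cnj (M $ j $ i))"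

lemma sum_UNIV_Plus: "(\<Sum>k\<in>(UNIV::('a::finite + 'b::finite) set). g k) = (\<Sum>k\<in>UNIV. g (Inl k)) + (\<Sum>k\<in>UNIV. g (Inr k))"
proof -
  have "(\<Sum>k\<in>(UNIV::('a::finite + 'b::finite) set). g k) = sum g (UNIV <+> UNIV)" by (simp add: UNIV_Plus_UNIV)
  also have "\<dots> = (\<Sum>k\<in>UNIV. g (Inl k)) + (\<Sum>k\<in>UNIV. g (Inr k))" by (subst sum.Plus) (simp_all add: comp_def)
  finally show ?thesis .
qed

lemma jd_sq[simp]: "jd i * jd i = 1" by (simp add: jd_def split: sum.split)
lemma cnj_jd[simp]: "cnj (jd i) = jd i" by (simp add: jd_def split: sum.split)
lemma jd_Inl[simp]: "jd (Inl p) = 1" and jd_Inr[simp]: "jd (Inr q) = -1" by (simp_all add: jd_def)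

lemma if_mult0: "(if P then a else 0) * b = (if P then a * b else (0::'a::mult_zero))" by simp

lemma Jmat_entry: "Jmat $ i $ j = (if i = j then jd i else 0)"
  by (simp add: Jmat_def jd_def)

lemma J_mult_left: "(Jmat ** M) $ i $ j = jd i * M $ i $ j"
  by (simp add: matrix_matrix_mult_def Jmat_entry if_mult0)

lemma mult_if0: "b * (if P then a else 0) = (if P then b * a else (0::'a::mult_zero))" by simp

lemma J_mult_right: "(M ** Jmat) $ i $ j = M $ i $ j * jd j"
  by (simp add: matrix_matrix_mult_def Jmat_entry mult_if0)

lemma J_vec: "(Jmat *v x) $ i = jd i * x $ i"
  by (simp add: matrix_vector_mult_def Jmat_entry if_mult0)

lemma JJ: "Jmat ** Jmat = (mat 1 :: complex^('m1::finite + 'm2::finite)^('m1 + 'm2))"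
  by (simp add: vec_eq_iff J_mult_left Jmat_entry mat_def)

lemma mat_mult_entry: "(mat c ** M) $ i $ j = c * M $ i $ j"
  by (simp add: matrix_matrix_mult_def mat_def if_mult0)

lemma mat_entry: "mat c $ i $ j = (if i = j then c else 0)" by (simp add: mat_def)

lemma Dcoef_entry: "Dcoef v z t $ i $ j = \<i> * (z * (if i = j then jd i else 0) + jd i * Vmat (v t) $ i $ j)"
  by (simp add: Dcoef_def mat_mult_entry J_mult_left J_mult_right Jmat_entry mat_entry)

lemma Vmat_herm: "cnj (Vmat B $ j $ i) = Vmat B $ i $ j"
  by (simp add: Vmat_def split: sum.split)

lemma adjm_entry[simp]: "adjm M $ i $ j = cnj (M $ j $ i)" by (simp add: adjm_def)

lemma adjm_mult: "adjm (M ** N) = adjm N ** adjm M"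
  by (simp add: vec_eq_iff matrix_matrix_mult_def mult.commute)

lemma adjm_one: "adjm (mat 1) = mat 1"
  by (simp add: vec_eq_iff mat_def)

lemma Dcoef_adj: "adjm (Dcoef v (cnj z) t) ** Jmat + Jmat ** Dcoef v z t = 0"
  by (simp add: vec_eq_iff J_mult_left J_mult_right Dcoef_entry Vmat_herm algebra_simps)

lemma Qmat_entry[simp]:
  "Qmat P $ Inl p $ Inl p' = (if p = p' then 1 else 0)"
  "Qmat P $ Inl p $ Inr q = 0"
  "Qmat P $ Inr q $ Inl p = P $ q $ p"
  "Qmat P $ Inr q $ Inr q' = (if q = q' then 1 else 0)"
  by (simp_all add: Qmat_def)

lemma IPhi_entry[simp]:
  "IPhi P $ Inl p $ p' = (if p = p' then 1 else 0)"
  "IPhi P $ Inr q $ p = P $ q $ p"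
  by (simp_all add: IPhi_def)

lemma mat_entry_sum[simp]:
  "mat c $ Inl p $ Inl p' = (if p = p' then c else 0)"
  "mat c $ Inl p $ Inr q = 0"
  "mat c $ Inr q $ Inl p = 0"
  "mat c $ Inr q $ Inr q' = (if q = q' then c else 0)"
  by (simp_all add: mat_entry)

lemma all_sum_iff: "(\<forall>x::'a+'b. P x) \<longleftrightarrow> (\<forall>a. P (Inl a)) \<and> (\<forall>b. P (Inr b))"
  by (metis sum.exhaust)

lemma Q_inv: "Qmat P ** Qmat (-P) = mat 1" "Qmat (-P) ** Qmat P = mat 1"
  by (simp_all add: vec_eq_iff matrix_matrix_mult_def sum_UNIV_Plus if_mult0 mult_if0 all_sum_iff sum_negf)

lemma Q_vec_Inl: "(Qmat P *v g) $ Inl p = g $ Inl p"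
  by (simp add: matrix_vector_mult_def sum_UNIV_Plus if_mult0)

lemma Q_vec_IPhi: "(\<forall>q. c $ Inr q = 0) \<Longrightarrow> Qmat P *v c = IPhi P *v (\<chi> p. c $ Inl p)"
  by (simp add: vec_eq_iff matrix_vector_mult_def sum_UNIV_Plus if_mult0 all_sum_iff)


lemma cpx_scaleR: "(c::real) *\<^sub>R (w::complex) = of_real c * w" by (simp add: scaleR_conv_of_real)

lemma bil_mm: "bilinear (\<lambda>(A::complex^'n::finite^'m::finite) (B::complex^'k::finite^'n). A ** B)"
  unfolding bilinear_def linear_iff
  by (simp add: vec_eq_iff matrix_matrix_mult_def
      vector_scaleR_component cpx_scaleR sum_distrib_left algebra_simps sum.distrib)

lemma bil_mv: "bilinear (\<lambda>(A::complex^'n::finite^'m::finite) (x::complex^'n). A *v x)"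
  unfolding bilinear_def linear_iff
  by (simp add: vec_eq_iff matrix_vector_mult_def
      vector_scaleR_component cpx_scaleR sum_distrib_left algebra_simps sum.distrib)

lemma bil_adjJ: "bilinear (\<lambda>(M::complex^('m1::finite+'m2::finite)^('m1+'m2)) (N::complex^('m1+'m2)^('m1+'m2)). adjm M ** Jmat ** N)"
  unfolding bilinear_def linear_iff
  by (simp add: vec_eq_iff matrix_matrix_mult_def J_mult_right
      vector_scaleR_component cpx_scaleR sum_distrib_left sum_distrib_right algebra_simps sum.distrib)

definition hJ :: "complex^('m1::finite+'m2::finite) \<Rightarrow> complex^('m1+'m2) \<Rightarrow> complex" where
  "hJ x y = (\<Sum>i\<in>UNIV. cnj (x $ i) * jd i * y $ i)"

lemma bil_hJ: "bilinear hJ"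
  unfolding bilinear_def linear_iff hJ_def
  by (simp add: vector_scaleR_component cpx_scaleR sum_distrib_left algebra_simps sum.distrib)

lemma lin_Vmat: "linear Vmat"
  unfolding linear_iff
  by (auto simp: vec_eq_iff Vmat_def vector_scaleR_component cpx_scaleR split: sum.split)


lemma bilinear_swap': "bilinear h \<Longrightarrow> bilinear (\<lambda>x y. h y x)"
  by (simp add: bilinear_def)

lemma si_bil_cont:
  fixes h :: "'a::euclidean_space \<Rightarrow> 'b::euclidean_space \<Rightarrow> 'c::euclidean_space"
    and f :: "real \<Rightarrow> 'b" and g :: "real \<Rightarrow> 'a"
  assumes hb: "bilinear h" and f: "set_integrable lborel {0..b} f" and g: "continuous_on {0..b} g"
  shows "set_integrable lborel {0..b} (\<lambda>t. h (g t) (f t))"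
proof -
  interpret bb: bounded_bilinear h using hb by (simp add: bilinear_conv_bounded_bilinear)
  obtain K where K: "\<And>x y. norm (h x y) \<le> norm x * norm y * K" and Kp: "K > 0"
    using bb.pos_bounded by blast
  have "compact (g ` {0..b})" by (rule compact_continuous_image[OF g]) auto
  then have "bounded (g ` {0..b})" by (rule compact_imp_bounded)
  then obtain C where C0: "\<forall>x\<in>g ` {0..b}. norm x \<le> C" unfolding bounded_iff by blast
  have C: "norm (g t) \<le> C" if "t \<in> {0..b}" for t using C0 that by simp
  define g1 where "g1 t = indicator {0..b} t *\<^sub>R g t" for t
  define f1 where "f1 t = indicator {0..b} t *\<^sub>R f t" for t
  have if1: "integrable lborel f1" using f by (simp add: f1_def[abs_def] set_integrable_def)
  have mf1: "f1 \<in> borel_measurable lborel" using if1 by (rule borel_measurable_integrable)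
  have mg1: "g1 \<in> borel_measurable lborel"
    unfolding g1_def[abs_def] using borel_measurable_continuous_on_indicator[OF _ g]
    by (simp add: measurable_lborel1)
  have cont_h: "continuous_on UNIV (\<lambda>x. h (fst x) (snd x))"
    by (intro bb.continuous_on continuous_on_fst continuous_on_snd continuous_on_id)
  have eq: "indicator {0..b} t *\<^sub>R h (g t) (f t) = h (g1 t) (f1 t)" for t
    by (simp add: g1_def f1_def bb.scaleR_left bb.scaleR_right indicator_def)
  show ?thesis
    unfolding set_integrable_def eq
  proof (rule Bochner_Integration.integrable_bound)
    show "integrable lborel (\<lambda>t. (C * K) *\<^sub>R f1 t)" using if1 by simp
    show "(\<lambda>t. h (g1 t) (f1 t)) \<in> borel_measurable lborel"
      using borel_measurable_continuous_Pair[OF mg1 mf1 cont_h] by simp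
    show "AE t in lborel. norm (h (g1 t) (f1 t)) \<le> norm ((C * K) *\<^sub>R f1 t)"
    proof (rule AE_I2)
      fix t
      show "norm (h (g1 t) (f1 t)) \<le> norm ((C * K) *\<^sub>R f1 t)"
      proof (cases "t \<in> {0..b}")
        case True
        have C0: "0 \<le> C" using C[OF True] norm_ge_zero order_trans by blast
        have "norm (h (g1 t) (f1 t)) \<le> norm (g t) * norm (f1 t) * K"
          using K[of "g1 t" "f1 t"] True by (simp add: g1_def)
        also have "\<dots> \<le> C * norm (f1 t) * K"
          by (intro mult_right_mono C True) (use Kp in auto)
        finally show ?thesis using C0 Kp by (simp add: abs_of_nonneg algebra_simps)
      next
        case False then show ?thesis by (simp add: g1_def f1_def bb.zero_left)
      qed
    qed
  qed
qed

lemma si_bil_cont2: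
  fixes h :: "'a::euclidean_space \<Rightarrow> 'b::euclidean_space \<Rightarrow> 'c::euclidean_space"
    and f :: "real \<Rightarrow> 'a" and g :: "real \<Rightarrow> 'b"
  assumes hb: "bilinear h" and f: "set_integrable lborel {0..b} f" and g: "continuous_on {0..b} g"
  shows "set_integrable lborel {0..b} (\<lambda>t. h (f t) (g t))"
  using si_bil_cont[OF bilinear_swap'[OF hb] f g] by simp

lemma si_lin:
  fixes f :: "'z \<Rightarrow> 'a::euclidean_space" and T :: "'a \<Rightarrow> 'b::euclidean_space"
  assumes "bounded_linear T" "set_integrable M S f"
  shows "set_integrable M S (\<lambda>t. T (f t))"
proof -
  interpret T: bounded_linear T by fact
  have "integrable M (\<lambda>t. T (indicator S t *\<^sub>R f t))"
    by (rule integrable_bounded_linear[OF assms(1)]) (use assms(2) in \<open>simp add: set_integrable_def\<close>)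
  then show ?thesis by (simp add: set_integrable_def T.scaleR)
qed

lemma si_cont:
  fixes g :: "real \<Rightarrow> 'a::euclidean_space"
  assumes "continuous_on {a..b} g"
  shows "set_integrable lborel {a..b} g"
  unfolding set_integrable_def by (rule borel_integrable_compact) (use assms in auto)

lemma si_const: "set_integrable lborel {a..b::real} (\<lambda>t. c::'a::euclidean_space)"
  by (rule si_cont) (rule continuous_on_const)

lemma si_has_integral:
  fixes f :: "real \<Rightarrow> 'a::euclidean_space"
  assumes "set_integrable lborel S f"
  shows "(f has_integral (LINT t:S|lborel. f t)) S"
  using set_borel_integral_eq_integral[OF assms] by (simp add: integrable_integral)

lemma si_LINT_eq:
  fixes f :: "real \<Rightarrow> 'a::euclidean_space"
  assumes "set_integrable lborel S f" "(f has_integral I) S"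
  shows "(LINT t:S|lborel. f t) = I"
  using si_has_integral[OF assms(1)] assms(2) by (rule has_integral_unique)

lemma ibp:
  fixes h :: "'a::euclidean_space \<Rightarrow> 'b::euclidean_space \<Rightarrow> 'c::euclidean_space"
    and F' F :: "real \<Rightarrow> 'a" and G' G :: "real \<Rightarrow> 'b"
  assumes hb: "bilinear h" and b: "0 \<le> b"
    and iF: "set_integrable lborel {0..b} F'" and iG: "set_integrable lborel {0..b} G'"
    and eF: "\<And>x. x \<in> {0..b} \<Longrightarrow> (F' has_integral (F x - F 0)) {0..x}"
    and eG: "\<And>x. x \<in> {0..b} \<Longrightarrow> (G' has_integral (G x - G 0)) {0..x}"
  shows "set_integrable lborel {0..b} (\<lambda>t. h (F' t) (G t) + h (F t) (G' t))"
    and "((\<lambda>t. h (F' t) (G t) + h (F t) (G' t)) has_integral (h (F b) (G b) - h (F 0) (G 0))) {0..b}"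
proof -
  have hb': "bounded_bilinear h" using hb by (simp add: bilinear_conv_bounded_bilinear)
  have eF': "F x = F 0 + (LINT t:{0..x}|lborel. F' t)" if "x \<in> {0..b}" for x
    using si_LINT_eq[OF set_integrable_subset[OF iF] eF[OF that]] that by auto
  have eG': "G x = G 0 + (LINT t:{0..x}|lborel. G' t)" if "x \<in> {0..b}" for x
    using si_LINT_eq[OF set_integrable_subset[OF iG] eG[OF that]] that by auto
  note c = ibp_core[OF hb' iF iG eF' eG' b]
  show "set_integrable lborel {0..b} (\<lambda>t. h (F' t) (G t) + h (F t) (G' t))" by (rule c(1))
  show "((\<lambda>t. h (F' t) (G t) + h (F t) (G' t)) has_integral (h (F b) (G b) - h (F 0) (G 0))) {0..b}"
    using si_has_integral[OF c(1)] c(2) by simp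
qed

lemma L2_meas_sub: "L2_on S f \<Longrightarrow> B \<in> sets lborel \<Longrightarrow> B \<subseteq> S \<Longrightarrow> set_borel_measurable lborel B f"
  unfolding L2_on_def using set_borel_measurable_subset by blast

lemma L2_si:
  fixes f :: "real \<Rightarrow> 'a::euclidean_space"
  assumes L: "L2_on {0<..} f"
  shows "set_integrable lborel {0..b} f"
proof -
  have m: "set_borel_measurable lborel {0<..b} f" by (rule L2_meas_sub[OF L]) auto
  have i2: "set_integrable lborel {0<..b} (\<lambda>x. (norm (f x))\<^sup>2)"
    by (rule set_integrable_subset[of _ "{0<..}"]) (use L in \<open>auto simp: L2_on_def\<close>)
  have i1: "set_integrable lborel {0<..b} (\<lambda>x. 1::real)"
    by (rule set_integrable_subset[OF si_const[of 0 b]]) auto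
  have "set_integrable lborel {0<..b} f"
  proof (rule set_integrable_bound[OF set_integral_add(1)[OF i1 i2] m])
    show "AE x in lborel. x \<in> {0<..b} \<longrightarrow> norm (f x) \<le> norm (1 + (norm (f x))\<^sup>2)"
    proof (intro AE_I2 impI)
      fix x
      have "norm (f x) \<le> 1 + (norm (f x))\<^sup>2"
      proof -
        have "0 \<le> (norm (f x) - 1/2)\<^sup>2" by simp
        then show ?thesis by (simp add: power2_eq_square algebra_simps)
      qed
      then show "norm (f x) \<le> norm (1 + (norm (f x))\<^sup>2)" by simp
    qed
  qed
  moreover have "set_integrable lborel {0} f"
  proof -
    have "integrable lborel (\<lambda>x. indicator {0::real} x *\<^sub>R f 0)"
      by (rule integrable_indicator) auto
    moreover have "indicator {0::real} x *\<^sub>R f 0 = indicator {0} x *\<^sub>R f x" for x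
      by (cases "x = 0") (simp_all add: indicator_def)
    ultimately show ?thesis by (simp add: set_integrable_def)
  qed
  ultimately have "set_integrable lborel ({0} \<union> {0<..b}) f"
    by (intro set_integrable_Un) auto
  then show ?thesis by (rule set_integrable_subset) auto
qed


lemma mm_ladd: "((A::complex^'n::finite^'m::finite) + B) ** (C::complex^'k::finite^'n) = A ** C + B ** C"
  using bilinear_ladd[OF bil_mm] by blast

lemma lin_adjm: "linear (adjm :: complex^'n::finite^'m::finite \<Rightarrow> complex^'m^'n)"
  unfolding linear_iff by (simp add: vec_eq_iff vector_scaleR_component cpx_scaleR)

lemma blin_adjm: "bounded_linear (adjm :: complex^'n::finite^'m::finite \<Rightarrow> complex^'m^'n)"
  using lin_adjm linear_conv_bounded_linear by blast

lemma blin_mm_right: "bounded_linear (\<lambda>B::complex^'k::finite^'n::finite. (A::complex^'n^'m::finite) ** B)"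
proof -
  have b: "bilinear (\<lambda>(A::complex^'n::finite^'m::finite) (B::complex^'k::finite^'n). A ** B)" by (rule bil_mm)
  have "linear (\<lambda>B::complex^'k::finite^'n::finite. (A::complex^'n^'m::finite) ** B)"
    using b unfolding bilinear_def by simp
  then show ?thesis by (simp add: linear_conv_bounded_linear)
qed

lemma blin_mm_left: "bounded_linear (\<lambda>A::complex^'n::finite^'m::finite. A ** (B::complex^'k::finite^'n))"
proof -
  have b: "bilinear (\<lambda>(A::complex^'n::finite^'m::finite) (B::complex^'k::finite^'n). A ** B)" by (rule bil_mm)
  have "linear (\<lambda>A::complex^'n::finite^'m::finite. A ** (B::complex^'k::finite^'n))"
    using b unfolding bilinear_def by simp
  then show ?thesis by (simp add: linear_conv_bounded_linear)
qed

lemma blin_mv_right: "bounded_linear (\<lambda>x::complex^'n::finite. (A::complex^'n^'m::finite) *v x)"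
proof -
  have b: "bilinear (\<lambda>(A::complex^'n::finite^'m::finite) (x::complex^'n). A *v x)" by (rule bil_mv)
  have "linear (\<lambda>x::complex^'n::finite. (A::complex^'n^'m::finite) *v x)"
    using b unfolding bilinear_def by simp
  then show ?thesis by (simp add: linear_conv_bounded_linear)
qed

lemma blin_mv_left: "bounded_linear (\<lambda>A::complex^'n::finite^'m::finite. A *v (x::complex^'n))"
proof -
  have b: "bilinear (\<lambda>(A::complex^'n::finite^'m::finite) (x::complex^'n). A *v x)" by (rule bil_mv)
  have "linear (\<lambda>A::complex^'n::finite^'m::finite. A *v (x::complex^'n))"
    using b unfolding bilinear_def by simp
  then show ?thesis by (simp add: linear_conv_bounded_linear)
qed

lemma blin_Vmat: "bounded_linear Vmat"
  using lin_Vmat linear_conv_bounded_linear by blast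

lemma cont_mm: "continuous_on S f \<Longrightarrow> continuous_on S g \<Longrightarrow>
   continuous_on S (\<lambda>x. (f x :: complex^'n::finite^'m::finite) ** (g x :: complex^'k::finite^'n))"
  using bounded_bilinear.continuous_on[OF bil_mm[unfolded bilinear_conv_bounded_bilinear]] by blast

lemma cont_mv: "continuous_on S f \<Longrightarrow> continuous_on S g \<Longrightarrow>
   continuous_on S (\<lambda>x. (f x :: complex^'n::finite^'m::finite) *v (g x :: complex^'n))"
  using bounded_bilinear.continuous_on[OF bil_mv[unfolded bilinear_conv_bounded_bilinear]] by blast

lemma cont_adjm: "continuous_on S f \<Longrightarrow> continuous_on S (\<lambda>x. adjm (f x :: complex^'n::finite^'m::finite))"
  using bounded_linear.continuous_on[OF blin_adjm] by blast

lemma matrix_inv_eq: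
  fixes A :: "'a::field^'n::finite^'n"
  assumes "A ** B = mat 1" "B ** A = mat 1"
  shows "matrix_inv A = B"
proof -
  have "A ** matrix_inv A = mat 1 \<and> matrix_inv A ** A = mat 1"
    unfolding matrix_inv_def by (rule someI[of _ B]) (use assms in simp)
  then have "matrix_inv A = matrix_inv A ** (A ** B)" by (simp add: assms)
  also have "\<dots> = B" by (simp add: matrix_mul_assoc \<open>_ \<and> _\<close>)
  finally show ?thesis .
qed

lemma cont_open_closed:
  assumes "\<And>b. b \<ge> 0 \<Longrightarrow> continuous_on {0..b} g"
  shows "continuous_on {0<..} (g :: real \<Rightarrow> 'a::topological_space)"
proof -
  have "isCont g x" if "x \<in> {0<..}" for x
    using continuous_on_interior[OF assms[of "x+1"]] that by (simp add: interior_atLeastAtMost_real)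
  then show ?thesis by (simp add: continuous_at_imp_continuous_on)
qed

lemma meas_open:
  fixes g :: "real \<Rightarrow> 'a::euclidean_space"
  assumes "continuous_on {0<..} g"
  shows "set_borel_measurable lborel {0<..} g"
  unfolding set_borel_measurable_def
  using borel_measurable_continuous_on_indicator[OF _ assms] by (simp add: measurable_lborel1)

context
  fixes v :: "real \<Rightarrow> complex ^ 'm2::finite ^ 'm1::finite"
    and u :: "real \<Rightarrow> complex \<Rightarrow> complex ^ ('m1 + 'm2) ^ ('m1 + 'm2)"
  assumes v_loc: "\<forall>b\<ge>0. set_integrable lborel {0..b} v"
    and u_fund: "fund_sol v u"
begin

lemma A_si: "b \<ge> 0 \<Longrightarrow> set_integrable lborel {0..b} (Dcoef v z)"
proof -
  assume b: "b \<ge> 0"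
  have eq: "Dcoef v z t = mat \<i> ** (mat z ** Jmat) + mat \<i> ** (Jmat ** Vmat (v t))" for t
    by (simp add: Dcoef_def matrix_add_ldistrib)
  have bl1: "bounded_linear (\<lambda>B. Jmat ** Vmat B :: complex^('m1+'m2)^('m1+'m2))"
    by (rule bounded_linear_compose[OF blin_mm_right[of Jmat] blin_Vmat])
  have bl: "bounded_linear (\<lambda>B. mat \<i> ** (Jmat ** Vmat B) :: complex^('m1+'m2)^('m1+'m2))"
    by (rule bounded_linear_compose[OF blin_mm_right[of "mat \<i>"] bl1])
  show ?thesis
    unfolding eq[abs_def]
    by (rule set_integral_add(1)[OF si_const si_lin[OF bl]]) (use v_loc b in auto)
qed

lemma u_int: "b \<ge> 0 \<Longrightarrow> ((\<lambda>t. Dcoef v z t ** u t z) has_integral (u b z - mat 1)) {0..b}"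
  using u_fund by (simp add: fund_sol_def)

lemma u0: "u 0 z = mat 1"
proof -
  have "((\<lambda>t. Dcoef v z t ** u t z) has_integral 0) {0..0}"
    using has_integral_refl(2)[of _ 0] by simp
  from has_integral_unique[OF u_int[of 0 z] this] show ?thesis by simp
qed

lemma u_cont: "b \<ge> 0 \<Longrightarrow> continuous_on {0..b} (\<lambda>x. u x z)"
proof -
  assume b: "b \<ge> 0"
  have "(\<lambda>t. Dcoef v z t ** u t z) integrable_on {0..b}" using u_int[OF b] by blast
  then have c: "continuous_on {0..b} (\<lambda>x. mat 1 + integral {0..x} (\<lambda>t. Dcoef v z t ** u t z))"
    by (intro continuous_on_add continuous_on_const indefinite_integral_continuous_1)
  show ?thesis
  proof (rule continuous_on_eq[OF c])
    fix x assume "x \<in> {0..b}"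
    then have "integral {0..x} (\<lambda>t. Dcoef v z t ** u t z) = u x z - mat 1"
      using u_int[of x z] by (simp add: integral_unique)
    then show "mat 1 + integral {0..x} (\<lambda>t. Dcoef v z t ** u t z) = u x z" by simp
  qed
qed

lemma uA_si: "b \<ge> 0 \<Longrightarrow> set_integrable lborel {0..b} (\<lambda>t. Dcoef v z t ** u t z)"
  by (rule si_bil_cont2[OF bil_mm A_si u_cont])

lemma u_J: "x \<ge> 0 \<Longrightarrow> adjm (u x (cnj z)) ** Jmat ** u x z = Jmat"
proof -
  assume x: "x \<ge> 0"
  let ?h = "\<lambda>(M :: complex^('m1+'m2)^('m1+'m2)) N. adjm M ** Jmat ** (N :: complex^('m1+'m2)^('m1+'m2))"
  have hb: "bilinear ?h" by (rule bil_adjJ)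
  note I = ibp(2)[OF hb x uA_si[OF x, of "cnj z"] uA_si[OF x, of z], of "\<lambda>t. u t (cnj z)" "\<lambda>t. u t z"]
  have I': "((\<lambda>t. ?h (Dcoef v (cnj z) t ** u t (cnj z)) (u t z) + ?h (u t (cnj z)) (Dcoef v z t ** u t z))
        has_integral (?h (u x (cnj z)) (u x z) - ?h (u 0 (cnj z)) (u 0 z))) {0..x}"
    by (rule I) (auto simp: u_int u0)
  have zero: "?h (Dcoef v (cnj z) t ** u t (cnj z)) (u t z) + ?h (u t (cnj z)) (Dcoef v z t ** u t z) = 0" for t
  proof -
    have "?h (Dcoef v (cnj z) t ** u t (cnj z)) (u t z) + ?h (u t (cnj z)) (Dcoef v z t ** u t z)
       = adjm (u t (cnj z)) ** ((adjm (Dcoef v (cnj z) t) ** Jmat + Jmat ** Dcoef v z t) ** u t z)"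
      by (simp add: adjm_mult matrix_mul_assoc matrix_add_ldistrib mm_ladd)
    then show ?thesis by (simp add: Dcoef_adj)
  qed
  have "?h (u x (cnj z)) (u x z) - ?h (u 0 (cnj z)) (u 0 z) = 0"
    using I' unfolding zero by (rule has_integral_unique[OF _ has_integral_0])
  then show ?thesis by (simp add: u0 adjm_one)
qed

lemma u_inv:
  assumes "x \<ge> 0"
  shows "(Jmat ** adjm (u x (cnj z)) ** Jmat) ** u x z = mat 1"
    and "u x z ** (Jmat ** adjm (u x (cnj z)) ** Jmat) = mat 1"
proof -
  have "(Jmat ** adjm (u x (cnj z)) ** Jmat) ** u x z = Jmat ** (adjm (u x (cnj z)) ** Jmat ** u x z)"
    by (simp add: matrix_mul_assoc)
  then show 1: "(Jmat ** adjm (u x (cnj z)) ** Jmat) ** u x z = mat 1"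
    using u_J[OF assms, of z] by (simp add: JJ)
  show "u x z ** (Jmat ** adjm (u x (cnj z)) ** Jmat) = mat 1"
    using 1 by (simp add: matrix_left_right_inverse)
qed

end


lemma mat_vec: "mat c *v x = c *s (x :: complex^'n::finite)"
  by (simp add: vec_eq_iff matrix_vector_mult_def mat_entry if_mult0)

lemma mv_smult: "M *v (c *s x) = c *s (M *v (x :: complex^'n::finite))"
  by (simp add: vec_eq_iff matrix_vector_mult_def sum_distrib_left algebra_simps)

lemma mm_entry: "(A ** B) $ i $ j = (\<Sum>k\<in>UNIV. A $ i $ k * B $ k $ j)"
  by (simp add: matrix_matrix_mult_def)

lemma mm_mat_comm: "A ** (mat c ** B) = mat c ** (A ** (B :: complex^'k::finite^'n::finite))"
  apply (simp only: vec_eq_iff mm_entry)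
  apply (simp add: mat_entry mult_if0 if_mult0)
  by (simp add: sum_distrib_left algebra_simps)

lemma Dcoef_vec: "(Dcoef v z t *v y) $ i = \<i> * (z * jd i * y $ i + jd i * (Vmat (v t) *v y) $ i)"
  by (simp add: matrix_vector_mult_def Dcoef_entry if_mult0 mult_if0 distrib_right distrib_left sum.distrib
      sum_distrib_left mult.assoc)

lemma jd_sq2[simp]: "jd i * (jd i * x) = x" by (simp add: mult.assoc[symmetric])

lemma Lexpr_alg: "(- \<i>) *s (Jmat *v (Dcoef v z t *v y + \<i> *s (Jmat *v w))) - Vmat (v t) *v y = z *s y + w"
  by (simp add: vec_eq_iff J_vec Dcoef_vec algebra_simps)

definition Winv :: "(real \<Rightarrow> complex \<Rightarrow> complex ^ ('m1::finite + 'm2::finite) ^ ('m1 + 'm2))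
    \<Rightarrow> (complex \<Rightarrow> complex ^ 'm1 ^ 'm2) \<Rightarrow> complex \<Rightarrow> real \<Rightarrow> complex ^ ('m1 + 'm2) ^ ('m1 + 'm2)" where
  "Winv u \<phi> z t = Qmat (- \<phi> z) ** (Jmat ** adjm (u t (cnj z)) ** Jmat)"

definition kf where "kf u \<phi> f z t = Winv u \<phi> z t *v (Jmat *v f t)"

definition Gf where "Gf u \<phi> f a z x = Qmat (\<phi> z) *v (gvec u \<phi> f a z + \<i> *s Wint u \<phi> f z x)"

definition DYf where "DYf v u \<phi> f a z t =
   (Dcoef v z t ** u t z) *v Gf u \<phi> f a z t + u t z *v ((mat \<i> ** Qmat (\<phi> z)) *v kf u \<phi> f z t)"

definition c0 where "c0 u \<phi> f z a = (\<chi> p. \<i> * Wint u \<phi> f z a $ Inl p)"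

lemma L2_cong: "(\<And>x. x \<in> S \<Longrightarrow> f x = g x) \<Longrightarrow> L2_on S f \<longleftrightarrow> L2_on S g"
proof -
  assume eq: "\<And>x. x \<in> S \<Longrightarrow> f x = g x"
  have 1: "(\<lambda>x. indicator S x *\<^sub>R f x) = (\<lambda>x. indicator S x *\<^sub>R g x)"
    by (intro ext) (simp add: eq split: split_indicator)
  have 2: "(\<lambda>x. indicator S x *\<^sub>R (norm (f x))\<^sup>2) = (\<lambda>x. indicator S x *\<^sub>R (norm (g x))\<^sup>2)"
    by (intro ext) (simp add: eq split: split_indicator)
  show ?thesis unfolding L2_on_def set_borel_measurable_def set_integrable_def 1 2 ..
qed

lemma sbm_norm2:
  fixes g :: "real \<Rightarrow> 'a::euclidean_space"
  assumes "set_borel_measurable lborel S g"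
  shows "set_borel_measurable lborel S (\<lambda>x. (norm (g x))\<^sup>2)"
proof -
  have eq: "(\<lambda>x. indicator S x *\<^sub>R (norm (g x))\<^sup>2) = (\<lambda>x. (norm (indicator S x *\<^sub>R g x))\<^sup>2)"
    by (intro ext) (simp split: split_indicator)
  have [measurable]: "(\<lambda>x. indicator S x *\<^sub>R g x) \<in> borel_measurable lborel"
    using assms unfolding set_borel_measurable_def .
  have m2: "(\<lambda>x. (norm (indicator S x *\<^sub>R g x))\<^sup>2) \<in> borel_measurable lborel" by measurable
  show ?thesis unfolding set_borel_measurable_def eq by (rule m2)
qed

lemma L2_add:
  fixes f g :: "real \<Rightarrow> 'a::euclidean_space"
  assumes f: "L2_on S f" and g: "L2_on S g"
  shows "L2_on S (\<lambda>x. f x + g x)"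
proof -
  have m: "set_borel_measurable lborel S (\<lambda>x. f x + g x)"
  proof -
    have "(\<lambda>x. indicator S x *\<^sub>R f x + indicator S x *\<^sub>R g x) \<in> borel_measurable lborel"
      using f g unfolding L2_on_def set_borel_measurable_def by (intro borel_measurable_add) auto
    then show ?thesis unfolding set_borel_measurable_def by (simp add: scaleR_add_right)
  qed
  have i: "set_integrable lborel S (\<lambda>x. 2 * (norm (f x))\<^sup>2 + 2 * (norm (g x))\<^sup>2)"
    using f g unfolding L2_on_def
    by (intro set_integral_add(1) set_integrable_mult_right) auto
  have "set_integrable lborel S (\<lambda>x. (norm (f x + g x))\<^sup>2)"
  proof (rule set_integrable_bound[OF i sbm_norm2[OF m]])
    show "AE x in lborel. x \<in> S \<longrightarrow> norm ((norm (f x + g x))\<^sup>2) \<le> norm (2 * (norm (f x))\<^sup>2 + 2 * (norm (g x))\<^sup>2)"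
    proof (intro AE_I2 impI)
      fix x
      have "norm (f x + g x) \<le> norm (f x) + norm (g x)" by (rule norm_triangle_ineq)
      then have "(norm (f x + g x))\<^sup>2 \<le> (norm (f x) + norm (g x))\<^sup>2"
        by (simp add: power_mono)
      also have "\<dots> \<le> 2 * (norm (f x))\<^sup>2 + 2 * (norm (g x))\<^sup>2"
      proof -
        have "0 \<le> (norm (f x) - norm (g x))\<^sup>2" by simp
        then show ?thesis by (simp add: power2_eq_square algebra_simps)
      qed
      finally show "norm ((norm (f x + g x))\<^sup>2) \<le> norm (2 * (norm (f x))\<^sup>2 + 2 * (norm (g x))\<^sup>2)"
        by simp
    qed
  qed
  then show ?thesis using m by (simp add: L2_on_def)
qed

lemma L2_lin:
  fixes f :: "real \<Rightarrow> 'a::euclidean_space" and T :: "'a \<Rightarrow> 'b::euclidean_space"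
  assumes T: "bounded_linear T" and f: "L2_on S f"
  shows "L2_on S (\<lambda>x. T (f x))"
proof -
  interpret T: bounded_linear T by fact
  obtain K where K: "\<And>x. norm (T x) \<le> norm x * K" and Kp: "K > 0" using T.pos_bounded by blast
  have m: "set_borel_measurable lborel S (\<lambda>x. T (f x))"
  proof -
    have "(\<lambda>x. indicator S x *\<^sub>R T (f x)) = (\<lambda>x. T (indicator S x *\<^sub>R f x))"
      by (simp add: T.scaleR)
    moreover have "(\<lambda>x. T (indicator S x *\<^sub>R f x)) \<in> borel_measurable lborel"
    proof (rule measurable_compose[of "\<lambda>x. indicator S x *\<^sub>R f x" _ borel T])
      show "(\<lambda>x. indicator S x *\<^sub>R f x) \<in> borel_measurable lborel"
        using f unfolding L2_on_def set_borel_measurable_def by simp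
      show "T \<in> borel_measurable borel"
        by (rule borel_measurable_continuous_onI[OF linear_continuous_on[OF T]])
    qed
    ultimately show ?thesis unfolding set_borel_measurable_def by simp
  qed
  have i: "set_integrable lborel S (\<lambda>x. K\<^sup>2 * (norm (f x))\<^sup>2)"
    using f unfolding L2_on_def by (intro set_integrable_mult_right) auto
  have "set_integrable lborel S (\<lambda>x. (norm (T (f x)))\<^sup>2)"
  proof (rule set_integrable_bound[OF i sbm_norm2[OF m]])
    show "AE x in lborel. x \<in> S \<longrightarrow> norm ((norm (T (f x)))\<^sup>2) \<le> norm (K\<^sup>2 * (norm (f x))\<^sup>2)"
    proof (intro AE_I2 impI)
      fix x
      have "(norm (T (f x)))\<^sup>2 \<le> (norm (f x) * K)\<^sup>2" by (rule power_mono[OF K]) simp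
      then show "norm ((norm (T (f x)))\<^sup>2) \<le> norm (K\<^sup>2 * (norm (f x))\<^sup>2)"
        by (simp add: power_mult_distrib mult.commute)
    qed
  qed
  then show ?thesis using m by (simp add: L2_on_def)
qed


lemma Lexpr_inv:
  assumes h: "(- \<i>) *s (Jmat *v d) - Vmat (v t) *v y = z *s y + w"
  shows "d = Dcoef v z t *v y + \<i> *s (Jmat *v w)"
proof -
  have hi: "- \<i> * (jd i * d $ i) - (Vmat (v t) *v y) $ i = z * y $ i + w $ i" for i
    using arg_cong[OF h, of "\<lambda>x. x $ i"] by (simp add: J_vec)
  have "d $ i = (Dcoef v z t *v y + \<i> *s (Jmat *v w)) $ i" for i
  proof -
    have "d $ i = (\<i> * jd i) * (- \<i> * (jd i * d $ i))"
      by (simp add: algebra_simps)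
    also have "\<dots> = (\<i> * jd i) * (z * y $ i + w $ i + (Vmat (v t) *v y) $ i)"
      using hi[of i] by (simp add: algebra_simps)
    finally show ?thesis by (simp add: Dcoef_vec J_vec algebra_simps)
  qed
  then show ?thesis by (simp add: vec_eq_iff)
qed

lemma mult_cnj_sq: "w * cnj w = (complex_of_real (cmod w))\<^sup>2"
  by (metis complex_norm_square of_real_power)

lemma norm_vec_sq: "(norm (y :: complex^'n::finite))\<^sup>2 = (\<Sum>i\<in>UNIV. (norm (y $ i))\<^sup>2)"
  by (simp add: norm_vec_def L2_set_def sum_nonneg)

lemma herm_real:
  "cnj (\<Sum>i\<in>UNIV. cnj (y $ i) * (Vmat B *v y) $ i) = (\<Sum>i\<in>UNIV. cnj (y $ i) * (Vmat B *v y) $ i)"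
proof -
  have "cnj (\<Sum>i\<in>UNIV. cnj (y $ i) * (Vmat B *v y) $ i) = (\<Sum>i\<in>UNIV. \<Sum>j\<in>UNIV. y $ i * (Vmat B $ j $ i * cnj (y $ j)))"
    by (simp add: matrix_vector_mult_def cnj_sum sum_distrib_left Vmat_herm)
  also have "\<dots> = (\<Sum>j\<in>UNIV. \<Sum>i\<in>UNIV. y $ i * (Vmat B $ j $ i * cnj (y $ j)))"
    by (rule sum.swap)
  also have "\<dots> = (\<Sum>i\<in>UNIV. cnj (y $ i) * (Vmat B *v y) $ i)"
    by (simp add: matrix_vector_mult_def sum_distrib_left algebra_simps)
  finally show ?thesis .
qed

lemma hJ_A: "hJ (Dcoef v z t *v y) y + hJ y (Dcoef v z t *v y) = complex_of_real (-2 * Im z * (norm y)\<^sup>2)"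
proof -
  define s where "s = (\<Sum>i\<in>UNIV. cnj (y $ i) * (Vmat (v t) *v y) $ i)"
  have s_real: "cnj s = s" unfolding s_def by (rule herm_real)
  have n2: "(\<Sum>i\<in>UNIV. cnj (y $ i) * y $ i) = complex_of_real ((norm y)\<^sup>2)"
    by (simp add: norm_vec_sq mult_cnj_sq mult.commute)
  have 1: "hJ (Dcoef v z t *v y) y = - \<i> * cnj z * (\<Sum>i\<in>UNIV. cnj (y $ i) * y $ i) - \<i> * cnj s"
    by (simp add: hJ_def Dcoef_vec s_def cnj_sum sum_distrib_left sum_subtractf algebra_simps sum.distrib)
  have 2: "hJ y (Dcoef v z t *v y) = \<i> * z * (\<Sum>i\<in>UNIV. cnj (y $ i) * y $ i) + \<i> * s"
    by (simp add: hJ_def Dcoef_vec s_def sum_distrib_left algebra_simps sum.distrib)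
  have "hJ (Dcoef v z t *v y) y + hJ y (Dcoef v z t *v y) = \<i> * (z - cnj z) * complex_of_real ((norm y)\<^sup>2)"
    unfolding 1 2 n2 s_real by (simp add: algebra_simps)
  also have "\<i> * (z - cnj z) = complex_of_real (-2 * Im z)"
    by (simp add: complex_eq_iff)
  finally show ?thesis by simp
qed

lemma hJ_self: "hJ y y = (\<Sum>i\<in>UNIV. jd i * complex_of_real ((norm (y $ i))\<^sup>2))"
  by (simp add: hJ_def mult_cnj_sq algebra_simps)

lemma Re_hJ_lower: "- (norm y)\<^sup>2 \<le> Re (hJ y y)"
proof -
  have "Re (hJ y y) = (\<Sum>i\<in>UNIV. Re (jd i) * (norm (y $ i))\<^sup>2)"
    by (simp add: hJ_self Re_sum)
  moreover have "- (norm y)\<^sup>2 = (\<Sum>i\<in>UNIV. - ((norm (y $ i))\<^sup>2))"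
    by (simp add: norm_vec_sq sum_negf)
  moreover have "- ((norm (y $ i))\<^sup>2) \<le> Re (jd i) * (norm (y $ i))\<^sup>2" for i
    by (cases i) (simp_all add: jd_def)
  ultimately show ?thesis by (simp add: sum_mono)
qed

lemma Re_hJ_upper: "(\<forall>p. y $ Inl p = 0) \<Longrightarrow> Re (hJ y y) \<le> 0"
  by (simp add: hJ_self Re_sum sum_UNIV_Plus sum_nonpos)

context
  fixes v :: "real \<Rightarrow> complex ^ 'm2::finite ^ 'm1::finite"
    and u :: "real \<Rightarrow> complex \<Rightarrow> complex ^ ('m1 + 'm2) ^ ('m1 + 'm2)"
    and \<phi> :: "complex \<Rightarrow> complex ^ 'm1 ^ 'm2"
    and f :: "real \<Rightarrow> complex ^ ('m1 + 'm2)"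
    and a :: real and z :: complex
  assumes a_pos: "a > 0"
    and v_loc: "\<forall>b\<ge>0. set_integrable lborel {0..b} v"
    and v_supp: "AE x in lborel. x > a \<longrightarrow> v x = 0"
    and u_fund: "fund_sol v u"
    and phi_weyl: "weyl_fun u \<phi>"
    and z_up: "Im z > 0"
    and f_L2: "L2_on {0<..} f"
    and f_supp: "AE x in lborel. x > a \<longrightarrow> f x = 0"
begin

lemma w_Winv: "t \<ge> 0 \<Longrightarrow> u t z ** Qmat (\<phi> z) ** Winv u \<phi> z t = mat 1"
proof -
  assume t: "t \<ge> 0"
  note ui = u_inv[OF v_loc u_fund t, of z]
  have "u t z ** Qmat (\<phi> z) ** (Qmat (- \<phi> z) ** (Jmat ** adjm (u t (cnj z)) ** Jmat))
      = u t z ** (Qmat (\<phi> z) ** Qmat (- \<phi> z)) ** (Jmat ** adjm (u t (cnj z)) ** Jmat)"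
    by (simp add: matrix_mul_assoc)
  then show ?thesis unfolding Winv_def using ui(2) by (simp add: Q_inv)
qed

lemma winv: "t \<ge> 0 \<Longrightarrow> matrix_inv (wfun u \<phi> t z) = Winv u \<phi> z t"
proof -
  assume t: "t \<ge> 0"
  note ui = u_inv[OF v_loc u_fund t, of z]
  show ?thesis unfolding wfun_def Winv_def
  proof (rule matrix_inv_eq)
    have "u t z ** Qmat (\<phi> z) ** (Qmat (- \<phi> z) ** (Jmat ** adjm (u t (cnj z)) ** Jmat))
        = u t z ** (Qmat (\<phi> z) ** Qmat (- \<phi> z)) ** (Jmat ** adjm (u t (cnj z)) ** Jmat)"
      by (simp add: matrix_mul_assoc)
    then show "u t z ** Qmat (\<phi> z) ** (Qmat (- \<phi> z) ** (Jmat ** adjm (u t (cnj z)) ** Jmat)) = mat 1"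
      using ui(2) by (simp add: Q_inv)
    have "Qmat (- \<phi> z) ** (Jmat ** adjm (u t (cnj z)) ** Jmat) ** (u t z ** Qmat (\<phi> z))
        = Qmat (- \<phi> z) ** ((Jmat ** adjm (u t (cnj z)) ** Jmat) ** u t z) ** Qmat (\<phi> z)"
      by (simp add: matrix_mul_assoc)
    then show "Qmat (- \<phi> z) ** (Jmat ** adjm (u t (cnj z)) ** Jmat) ** (u t z ** Qmat (\<phi> z)) = mat 1"
      using ui(1) by (simp add: Q_inv)
  qed
qed

lemma winv_cont: "b \<ge> 0 \<Longrightarrow> continuous_on {0..b} (Winv u \<phi> z)"
  unfolding Winv_def[abs_def]
  by (intro cont_mm continuous_on_const cont_adjm u_cont[OF v_loc u_fund])

lemma k_si: "b \<ge> 0 \<Longrightarrow> set_integrable lborel {0..b} (kf u \<phi> f z)"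
  unfolding kf_def[abs_def]
  by (rule si_bil_cont[OF bil_mv si_lin[OF blin_mv_right L2_si[OF f_L2]] winv_cont])

lemma k_int: "x \<ge> 0 \<Longrightarrow> (kf u \<phi> f z has_integral Wint u \<phi> f z x) {0..x}"
proof -
  assume x: "x \<ge> 0"
  have "Wint u \<phi> f z x = integral {0..x} (kf u \<phi> f z)"
    unfolding Wint_def kf_def by (rule integral_cong) (simp add: winv)
  then show ?thesis using si_has_integral[OF k_si[OF x]] set_borel_integral_eq_integral(2)[OF k_si[OF x]]
    by simp
qed

lemma Wint0: "Wint u \<phi> f z 0 = 0"
proof -
  have "(kf u \<phi> f z has_integral 0) {0..0}" using has_integral_refl(2)[of "kf u \<phi> f z" 0] by simp
  from has_integral_unique[OF k_int[of 0] this] show ?thesis by simp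
qed

lemma Wint_cont: "b \<ge> 0 \<Longrightarrow> continuous_on {0..b} (Wint u \<phi> f z)"
proof -
  assume b: "b \<ge> 0"
  have "kf u \<phi> f z integrable_on {0..b}" using k_int[OF b] by blast
  then have c: "continuous_on {0..b} (\<lambda>x. integral {0..x} (kf u \<phi> f z))"
    by (rule indefinite_integral_continuous_1)
  show ?thesis
  proof (rule continuous_on_eq[OF c])
    fix x assume "x \<in> {0..b}"
    then show "integral {0..x} (kf u \<phi> f z) = Wint u \<phi> f z x" using k_int[of x] by (simp add: integral_unique)
  qed
qed

lemma G_cont: "b \<ge> 0 \<Longrightarrow> continuous_on {0..b} (Gf u \<phi> f a z)"
  unfolding Gf_def[abs_def] mat_vec[symmetric]
  by (intro cont_mv continuous_on_const continuous_on_add Wint_cont)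

lemma Y_eq: "Ysol u \<phi> f a x z = u x z *v Gf u \<phi> f a z x"
  by (simp add: Ysol_def wfun_def Gf_def matrix_vector_mul_assoc)

lemma Y_cont: "b \<ge> 0 \<Longrightarrow> continuous_on {0..b} (\<lambda>x. Ysol u \<phi> f a x z)"
  unfolding Y_eq by (intro cont_mv u_cont[OF v_loc u_fund] G_cont)

lemma G'_si: "b \<ge> 0 \<Longrightarrow> set_integrable lborel {0..b} (\<lambda>t. (mat \<i> ** Qmat (\<phi> z)) *v kf u \<phi> f z t)"
  by (rule si_lin[OF blin_mv_right k_si])

lemma G_int: "x \<ge> 0 \<Longrightarrow> ((\<lambda>t. (mat \<i> ** Qmat (\<phi> z)) *v kf u \<phi> f z t) has_integral
    (Gf u \<phi> f a z x - Gf u \<phi> f a z 0)) {0..x}"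
proof -
  assume x: "x \<ge> 0"
  have "((\<lambda>t. (mat \<i> ** Qmat (\<phi> z)) *v kf u \<phi> f z t) has_integral
      (mat \<i> ** Qmat (\<phi> z)) *v Wint u \<phi> f z x) {0..x}"
    using has_integral_linear[OF k_int[OF x] blin_mv_right] by (simp add: o_def)
  moreover have "Gf u \<phi> f a z x - Gf u \<phi> f a z 0 = (mat \<i> ** Qmat (\<phi> z)) *v Wint u \<phi> f z x"
    by (simp add: Gf_def Wint0 matrix_vector_right_distrib mv_smult mat_vec matrix_vector_mul_assoc[symmetric])
  ultimately show ?thesis by simp
qed

lemma DY_props:
  assumes b: "b \<ge> 0"
  shows "set_integrable lborel {0..b} (DYf v u \<phi> f a z)"
    and "(DYf v u \<phi> f a z has_integral (Ysol u \<phi> f a b z - Ysol u \<phi> f a 0 z)) {0..b}"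
proof -
  note I = ibp[OF bil_mv b uA_si[OF v_loc u_fund b, of z] G'_si[OF b], of "\<lambda>t. u t z" "Gf u \<phi> f a z"]
  have eF: "((\<lambda>t. Dcoef v z t ** u t z) has_integral u x z - u 0 z) {0..x}" if "x \<in> {0..b}" for x
    using u_int[OF v_loc u_fund, of x z] that by (simp add: u0[OF v_loc u_fund])
  have eG: "((\<lambda>t. (mat \<i> ** Qmat (\<phi> z)) *v kf u \<phi> f z t) has_integral (Gf u \<phi> f a z x - Gf u \<phi> f a z 0)) {0..x}"
    if "x \<in> {0..b}" for x using G_int that by simp
  show "set_integrable lborel {0..b} (DYf v u \<phi> f a z)"
    using I(1)[OF eF eG] unfolding DYf_def[abs_def] by simp
  show "(DYf v u \<phi> f a z has_integral (Ysol u \<phi> f a b z - Ysol u \<phi> f a 0 z)) {0..b}"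
    using I(2)[OF eF eG] unfolding DYf_def[abs_def] Y_eq by simp
qed

lemma DY_eq: "t \<ge> 0 \<Longrightarrow> DYf v u \<phi> f a z t = Dcoef v z t *v Ysol u \<phi> f a t z + \<i> *s (Jmat *v f t)"
proof -
  assume t: "t \<ge> 0"
  have "u t z ** (mat \<i> ** Qmat (\<phi> z)) ** Winv u \<phi> z t = mat \<i> ** (u t z ** Qmat (\<phi> z) ** Winv u \<phi> z t)"
    by (subst mm_mat_comm) (simp add: matrix_mul_assoc)
  also have "u t z ** Qmat (\<phi> z) ** Winv u \<phi> z t = mat 1"
    by (rule w_Winv[OF t])
  finally have e: "u t z ** (mat \<i> ** Qmat (\<phi> z)) ** Winv u \<phi> z t = mat \<i>" by simp
  have e2: "u t z *v ((mat \<i> ** Qmat (\<phi> z)) *v (Winv u \<phi> z t *v (Jmat *v f t)))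
     = (u t z ** (mat \<i> ** Qmat (\<phi> z)) ** Winv u \<phi> z t) *v (Jmat *v f t)"
    by (simp only: matrix_vector_mul_assoc matrix_mul_assoc)
  have e3: "(Dcoef v z t ** u t z) *v Gf u \<phi> f a z t = Dcoef v z t *v Ysol u \<phi> f a t z"
    by (simp only: Y_eq matrix_vector_mul_assoc)
  show ?thesis
    unfolding DYf_def kf_def e2 e3 e by (simp add: mat_vec)
qed

lemma Lexpr_Y: "t \<ge> 0 \<Longrightarrow> Lexpr v (\<lambda>x. Ysol u \<phi> f a x z) (DYf v u \<phi> f a z) t = z *s Ysol u \<phi> f a t z + f t"
  unfolding Lexpr_def by (simp only: DY_eq Lexpr_alg)

lemma Wint_const: "x \<ge> a \<Longrightarrow> Wint u \<phi> f z x = Wint u \<phi> f z a"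
proof -
  assume xa: "x \<ge> a"
  have x0: "x \<ge> 0" using xa a_pos by simp
  have si: "set_integrable lborel {a..x} (kf u \<phi> f z)"
    by (rule set_integrable_subset[OF k_si[OF x0]]) (use a_pos in auto)
  have "(LINT t:{a..x}|lborel. kf u \<phi> f z t) = 0"
    unfolding set_lebesgue_integral_def
  proof (rule integral_eq_zero_AE)
    show "AE t in lborel. indicator {a..x} t *\<^sub>R kf u \<phi> f z t = 0"
      using f_supp AE_lborel_singleton[of a]
    proof eventually_elim
      case (elim t)
      then show ?case by (cases "t \<in> {a..x}") (auto simp: kf_def)
    qed
  qed
  then have "(kf u \<phi> f z has_integral 0) {a..x}" using si_has_integral[OF si] by simp
  from has_integral_combine[OF _ xa k_int[of a] this] a_pos
  have "(kf u \<phi> f z has_integral Wint u \<phi> f z a) {0..x}" by simp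
  from has_integral_unique[OF k_int[OF x0] this] show ?thesis .
qed

lemma Y_tail: "x \<ge> a \<Longrightarrow> Ysol u \<phi> f a x z = (u x z ** IPhi (\<phi> z)) *v c0 u \<phi> f z a"
proof -
  assume xa: "x \<ge> a"
  let ?c = "gvec u \<phi> f a z + \<i> *s Wint u \<phi> f z a"
  have cr: "\<forall>q. ?c $ Inr q = 0" by (simp add: gvec_def)
  have cl: "(\<chi> p. ?c $ Inl p) = c0 u \<phi> f z a" by (simp add: gvec_def c0_def)
  have "Ysol u \<phi> f a x z = u x z *v (Qmat (\<phi> z) *v ?c)"
    unfolding Y_eq Gf_def Wint_const[OF xa] ..
  also have "\<dots> = u x z *v (IPhi (\<phi> z) *v c0 u \<phi> f z a)" by (simp only: Q_vec_IPhi[OF cr] cl)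
  finally show ?thesis by (simp add: matrix_vector_mul_assoc)
qed

lemma Y_L2: "L2_on {0<..} (\<lambda>x. Ysol u \<phi> f a x z)"
proof -
  let ?Y = "\<lambda>x. Ysol u \<phi> f a x z"
  have mY: "set_borel_measurable lborel {0<..} ?Y"
    by (rule meas_open[OF cont_open_closed[OF Y_cont]])
  have i1: "set_integrable lborel {0<..a} (\<lambda>x. (norm (?Y x))\<^sup>2)"
  proof -
    have "continuous_on {0..a} (\<lambda>x. (norm (?Y x))\<^sup>2)"
      using a_pos by (intro continuous_on_power continuous_on_norm Y_cont) simp
    then have "set_integrable lborel {0..a} (\<lambda>x. (norm (?Y x))\<^sup>2)" by (rule si_cont)
    then show ?thesis by (rule set_integrable_subset) auto
  qed
  obtain K where K: "\<And>x y. norm ((x::complex^'m1^('m1+'m2)) *v y) \<le> norm x * norm y * K" and Kp: "K > 0"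
  proof -
    have "bounded_bilinear (\<lambda>(x::complex^'m1^('m1+'m2)) y. x *v y)"
      using bil_mv[unfolded bilinear_conv_bounded_bilinear] .
    from bounded_bilinear.pos_bounded[OF this] show ?thesis using that by blast
  qed
  have Mw: "L2_on {0<..} (\<lambda>x. u x z ** IPhi (\<phi> z))" using phi_weyl z_up by (simp add: weyl_fun_def)
  have Mi: "set_integrable lborel {0<..} (\<lambda>x. (norm (u x z ** IPhi (\<phi> z)))\<^sup>2)"
    using Mw by (simp add: L2_on_def)
  have Mi2: "set_integrable lborel {a<..} (\<lambda>x. (norm (u x z ** IPhi (\<phi> z)))\<^sup>2)"
    by (rule set_integrable_subset[OF Mi]) (use a_pos in auto)
  have mY2: "set_borel_measurable lborel {a<..} ?Y"
    by (rule set_borel_measurable_subset[OF mY]) (use a_pos in auto)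
  have i2: "set_integrable lborel {a<..} (\<lambda>x. (norm (?Y x))\<^sup>2)"
  proof (rule set_integrable_bound[OF set_integrable_mult_right[OF Mi2] sbm_norm2[OF mY2]])
    show "AE x in lborel. x \<in> {a<..} \<longrightarrow> norm ((norm (?Y x))\<^sup>2) \<le> norm ((K * norm (c0 u \<phi> f z a))\<^sup>2 * (norm (u x z ** IPhi (\<phi> z)))\<^sup>2)"
    proof (intro AE_I2 impI)
      fix x assume "x \<in> {a<..}"
      then have "?Y x = (u x z ** IPhi (\<phi> z)) *v c0 u \<phi> f z a" using Y_tail by simp
      then have "norm (?Y x) \<le> norm (u x z ** IPhi (\<phi> z)) * norm (c0 u \<phi> f z a) * K"
        using K[of "u x z ** IPhi (\<phi> z)" "c0 u \<phi> f z a"] by simp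
      then have "(norm (?Y x))\<^sup>2 \<le> (norm (u x z ** IPhi (\<phi> z)) * norm (c0 u \<phi> f z a) * K)\<^sup>2"
        by (rule power_mono) simp
      also have "\<dots> = (K * norm (c0 u \<phi> f z a))\<^sup>2 * (norm (u x z ** IPhi (\<phi> z)))\<^sup>2"
        by (simp add: power_mult_distrib)
      finally show "norm ((norm (?Y x))\<^sup>2) \<le> norm ((K * norm (c0 u \<phi> f z a))\<^sup>2 * (norm (u x z ** IPhi (\<phi> z)))\<^sup>2)"
        by simp
    qed
  qed
  have "set_integrable lborel ({0<..a} \<union> {a<..}) (\<lambda>x. (norm (?Y x))\<^sup>2)"
    by (rule set_integrable_Un[OF i1 i2]) auto
  moreover have "{0<..a} \<union> {a<..} = {0<..}" using a_pos by auto
  ultimately show ?thesis using mY by (simp add: L2_on_def)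
qed

lemma Lexpr_L2: "L2_on {0<..} (Lexpr v (\<lambda>x. Ysol u \<phi> f a x z) (DYf v u \<phi> f a z))"
proof -
  have "L2_on {0<..} (\<lambda>t. mat z *v Ysol u \<phi> f a t z + f t)"
    by (rule L2_add[OF L2_lin[OF blin_mv_right Y_L2] f_L2])
  moreover have eq: "\<And>t. t \<in> {0<..} \<Longrightarrow> Lexpr v (\<lambda>x. Ysol u \<phi> f a x z) (DYf v u \<phi> f a z) t = mat z *v Ysol u \<phi> f a t z + f t"
    by (simp add: Lexpr_Y mat_vec)
  ultimately show ?thesis by (simp only: L2_cong[OF eq])
qed

lemma Y0: "Ysol u \<phi> f a 0 z $ Inl p = 0"
  by (simp add: Y_eq Gf_def Wint0 u0[OF v_loc u_fund] Q_vec_Inl gvec_def)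

lemma existence: "L_resolvent_eq v z f (\<lambda>x. Ysol u \<phi> f a x z)"
  unfolding L_resolvent_eq_def
proof (intro exI conjI)
  show "L_dom v (\<lambda>x. Ysol u \<phi> f a x z) (DYf v u \<phi> f a z)"
    unfolding L_dom_def
  proof (intro conjI allI impI)
    show "L2_on {0<..} (\<lambda>x. Ysol u \<phi> f a x z)" by (rule Y_L2)
    show "set_integrable lborel {0..b} (DYf v u \<phi> f a z)" if "b \<ge> 0" for b by (rule DY_props(1)[OF that])
    show "(DYf v u \<phi> f a z has_integral Ysol u \<phi> f a x z - Ysol u \<phi> f a 0 z) {0..x}" if "x \<ge> 0" for x
      by (rule DY_props(2)[OF that])
    show "L2_on {0<..} (Lexpr v (\<lambda>x. Ysol u \<phi> f a x z) (DYf v u \<phi> f a z))" by (rule Lexpr_L2)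
    show "Ysol u \<phi> f a 0 z $ Inl p = 0" for p by (rule Y0)
  qed
  show "AE x in lborel. 0 < x \<longrightarrow> Lexpr v (\<lambda>x. Ysol u \<phi> f a x z) (DYf v u \<phi> f a z) x - z *s Ysol u \<phi> f a x z = f x"
    by (intro AE_I2 impI) (simp add: Lexpr_Y)
qed

lemma uniqueness:
  assumes R: "L_resolvent_eq v z f Y'"
  shows "AE x in lborel. x > 0 \<longrightarrow> Y' x = Ysol u \<phi> f a x z"
proof -
  obtain DY' where L: "L_dom v Y' DY'"
    and E: "AE x in lborel. x > 0 \<longrightarrow> Lexpr v Y' DY' x - z *s Y' x = f x"
    using R unfolding L_resolvent_eq_def by blast
  define Y where "Y = (\<lambda>x. Ysol u \<phi> f a x z)"
  define DY where "DY = DYf v u \<phi> f a z"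
  define D where "D = (\<lambda>x. Y' x - Y x)"
  define DD where "DD = (\<lambda>t. DY' t - DY t)"
  have Y'L2: "L2_on {0<..} Y'" using L unfolding L_dom_def by blast
  have Y'si: "set_integrable lborel {0..b} DY'" if "b \<ge> 0" for b using L that unfolding L_dom_def by blast
  have Y'int: "(DY' has_integral (Y' x - Y' 0)) {0..x}" if "x \<ge> 0" for x using L that unfolding L_dom_def by blast
  have Y'0: "Y' 0 $ Inl p = 0" for p using L unfolding L_dom_def by blast
  have DL2: "L2_on {0<..} D"
    using L2_add[OF Y'L2 L2_lin[OF bounded_linear_minus[OF bounded_linear_ident] Y_L2]]
    by (simp add: D_def Y_def)
  have DDsi: "set_integrable lborel {0..b} DD" if "b \<ge> 0" for b
    unfolding DD_def DY_def by (rule set_integral_diff(1)[OF Y'si[OF that] DY_props(1)[OF that]])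
  have DDint: "(DD has_integral (D x - D 0)) {0..x}" if "x \<ge> 0" for x
    using has_integral_diff[OF Y'int[OF that] DY_props(2)[OF that]]
    by (simp add: DD_def DY_def D_def Y_def algebra_simps)
  have D0: "\<forall>p. D 0 $ Inl p = 0" by (simp add: D_def Y_def Y'0 Y0)
  have DDae: "AE t in lborel. t > 0 \<longrightarrow> DD t = Dcoef v z t *v D t"
    using E
  proof eventually_elim
    case (elim t)
    show ?case
    proof
      assume t: "t > 0"
      then have "(- \<i>) *s (Jmat *v DY' t) - Vmat (v t) *v Y' t = z *s Y' t + f t"
        using elim by (simp add: Lexpr_def algebra_simps)
      then have "DY' t = Dcoef v z t *v Y' t + \<i> *s (Jmat *v f t)" by (rule Lexpr_inv)
      moreover have "DY t = Dcoef v z t *v Y t + \<i> *s (Jmat *v f t)"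
        using DY_eq[of t] t by (simp add: DY_def Y_def)
      ultimately show "DD t = Dcoef v z t *v D t"
        by (simp add: DD_def D_def matrix_vector_mult_diff_distrib)
    qed
  qed
  have Dcont: "continuous_on {0..b} D" if b: "b \<ge> 0" for b
  proof -
    have "DD integrable_on {0..b}" using DDint[OF b] by blast
    then have c: "continuous_on {0..b} (\<lambda>x. D 0 + integral {0..x} DD)"
      by (intro continuous_on_add continuous_on_const indefinite_integral_continuous_1)
    show ?thesis
    proof (rule continuous_on_eq[OF c])
      fix x assume "x \<in> {0..b}"
      then show "D 0 + integral {0..x} DD = D x" using DDint[of x] by (simp add: integral_unique)
    qed
  qed
  define N where "N = (\<lambda>x. (norm (D x))\<^sup>2)"
  have Nsi: "set_integrable lborel {0..x} N" if "x \<ge> 0" for x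
    unfolding N_def by (intro si_cont continuous_on_power continuous_on_norm Dcont that)
  define G where "G = (\<lambda>x. LINT t:{0..x}|lborel. N t)"
  have key: "2 * Im z * G x \<le> N x" if x: "x \<ge> 0" for x
  proof -
    have eD: "(DD has_integral D y - D 0) {0..y}" if "y \<in> {0..x}" for y using DDint that by simp
    note I = ibp[OF bil_hJ x DDsi[OF x] DDsi[OF x] eD eD]
    have e1: "hJ (D x) (D x) - hJ (D 0) (D 0) = (LINT t:{0..x}|lborel. hJ (DD t) (D t) + hJ (D t) (DD t))"
      using si_LINT_eq[OF I(1) I(2)] by simp
    have si2: "set_integrable lborel {0..x} (\<lambda>t. complex_of_real (-2 * Im z * N t))"
      by (rule si_lin[OF bounded_linear_of_real set_integrable_mult_right[OF Nsi[OF x]]])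
    have e2: "(LINT t:{0..x}|lborel. hJ (DD t) (D t) + hJ (D t) (DD t)) =
              (LINT t:{0..x}|lborel. complex_of_real (-2 * Im z * N t))"
      unfolding set_lebesgue_integral_def
    proof (rule integral_cong_AE)
      show "(\<lambda>t. indicator {0..x} t *\<^sub>R (hJ (DD t) (D t) + hJ (D t) (DD t))) \<in> borel_measurable lborel"
        using I(1) unfolding set_integrable_def by (rule borel_measurable_integrable)
      show "(\<lambda>t. indicator {0..x} t *\<^sub>R complex_of_real (-2 * Im z * N t)) \<in> borel_measurable lborel"
        using si2 unfolding set_integrable_def by (rule borel_measurable_integrable)
      show "AE t in lborel. indicator {0..x} t *\<^sub>R (hJ (DD t) (D t) + hJ (D t) (DD t)) =
            indicator {0..x} t *\<^sub>R complex_of_real (-2 * Im z * N t)"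
        using DDae AE_lborel_singleton[of 0]
      proof eventually_elim
        case (elim t)
        show ?case
        proof (cases "t \<in> {0..x}")
          case True
          with elim have "DD t = Dcoef v z t *v D t" by auto
          then show ?thesis using True by (simp add: hJ_A N_def)
        qed simp
      qed
    qed
    have e3: "(LINT t:{0..x}|lborel. complex_of_real (-2 * Im z * N t)) = complex_of_real (-2 * Im z * G x)"
    proof -
      have eqf: "(\<lambda>t. indicator {0..x} t *\<^sub>R complex_of_real (-2 * Im z * N t)) =
          (\<lambda>t. complex_of_real (indicator {0..x} t *\<^sub>R (-2 * Im z * N t)))"
        by (intro ext) (simp split: split_indicator)
      have "(LINT t:{0..x}|lborel. complex_of_real (-2 * Im z * N t)) =
            complex_of_real (LINT t:{0..x}|lborel. -2 * Im z * N t)"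
        unfolding set_lebesgue_integral_def eqf
        by (rule integral_bounded_linear[OF bounded_linear_of_real])
           (use set_integrable_mult_right[OF Nsi[OF x], of "-2 * Im z"] in \<open>simp add: set_integrable_def\<close>)
      also have "(LINT t:{0..x}|lborel. -2 * Im z * N t) = -2 * Im z * G x"
        unfolding G_def by (rule set_integral_mult_right)
      finally show ?thesis .
    qed
    have "Re (hJ (D x) (D x)) - Re (hJ (D 0) (D 0)) = -2 * Im z * G x"
      using arg_cong[OF e1[unfolded e2 e3], of Re] by simp
    moreover have "- N x \<le> Re (hJ (D x) (D x))" unfolding N_def by (rule Re_hJ_lower)
    moreover have "Re (hJ (D 0) (D 0)) \<le> 0" by (rule Re_hJ_upper[OF D0])
    ultimately show ?thesis by simp
  qed
  have Nnn: "0 \<le> N t" for t by (simp add: N_def)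
  have Gmono: "G x0 \<le> G x" if "0 \<le> x0" "x0 \<le> x" for x0 x
    unfolding G_def set_lebesgue_integral_def
    by (rule integral_mono) (use Nsi that in \<open>auto simp: set_integrable_def Nnn split: split_indicator\<close>)
  have NL2: "set_integrable lborel {0<..} N" using DL2 by (simp add: L2_on_def N_def)
  have G0: "G x \<le> 0" if x: "x \<ge> 0" for x
  proof (rule ccontr)
    assume "\<not> G x \<le> 0"
    then have Gp: "G x > 0" by simp
    define c where "c = 2 * Im z * G x"
    have cp: "c > 0" using Gp z_up by (simp add: c_def)
    have lowN: "c \<le> N t" if "t \<ge> x" for t
    proof -
      have "c \<le> 2 * Im z * G t" unfolding c_def using Gmono[OF x that] z_up by simp
      also have "\<dots> \<le> N t" using key[of t] that x by simp
      finally show ?thesis .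
    qed
    define I where "I = (LINT t:{0<..}|lborel. N t)"
    define M where "M = I / c + 1"
    define A where "A = {x+1..x+1+M}"
    have I0: "I \<ge> 0" unfolding I_def set_lebesgue_integral_def
      by (rule integral_nonneg_AE) (simp add: Nnn)
    have "I / c \<ge> 0" using I0 cp by simp
    then have Mp: "M > 0" by (simp add: M_def)
    have Asub: "A \<subseteq> {0<..}" using x by (auto simp: A_def)
    have NA: "set_integrable lborel A N" by (rule set_integrable_subset[OF NL2]) (use Asub in \<open>auto simp: A_def\<close>)
    have "(LINT t:A|lborel. c) = c * M"
    proof -
      have "((\<lambda>t. c) has_integral (Henstock_Kurzweil_Integration.content A *\<^sub>R c)) A" unfolding A_def by (rule has_integral_const_real)
      moreover have "Henstock_Kurzweil_Integration.content A = M" using Mp by (simp add: A_def)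
      ultimately have "((\<lambda>t. c) has_integral (c * M)) A" by (simp add: mult.commute)
      then show ?thesis using si_LINT_eq[OF si_const] unfolding A_def by blast
    qed
    moreover have "(LINT t:A|lborel. c) \<le> (LINT t:A|lborel. N t)"
      by (rule set_integral_mono[OF _ NA]) (use lowN in \<open>auto simp: A_def si_const\<close>)
    moreover have "(LINT t:A|lborel. N t) \<le> I"
      unfolding I_def set_lebesgue_integral_def
      by (rule integral_mono) (use NA NL2 Asub in \<open>auto simp: set_integrable_def Nnn split: split_indicator\<close>)
    ultimately have "c * M \<le> I" by simp
    moreover have "c * M = I + c" using cp by (simp add: M_def field_simps)
    ultimately show False using cp by simp
  qed
  have AEn: "AE t in lborel. t \<in> {0..real n} \<longrightarrow> D t = 0" for n :: nat
  proof -
    have "G (real n) \<ge> 0" unfolding G_def set_lebesgue_integral_def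
      by (rule integral_nonneg_AE) (simp add: Nnn)
    then have "G (real n) = 0" using G0[of "real n"] by simp
    then have "(LINT t|lborel. indicator {0..real n} t *\<^sub>R N t) = 0"
      by (simp add: G_def set_lebesgue_integral_def)
    then have "AE t in lborel. indicator {0..real n} t *\<^sub>R N t = 0"
      using integral_nonneg_eq_0_iff_AE[of lborel "\<lambda>t. indicator {0..real n} t *\<^sub>R N t"]
        Nsi[of "real n"] by (simp add: set_integrable_def Nnn)
    then show ?thesis by eventually_elim (auto simp: N_def D_def indicator_def)
  qed
  have "AE t in lborel. \<forall>n::nat. t \<in> {0..real n} \<longrightarrow> D t = 0"
    unfolding AE_all_countable using AEn by blast
  then show ?thesis
  proof eventually_elim
    case (elim t)
    show ?case
    proof
      assume t: "t > 0"
      have "t \<in> {0..real (nat \<lceil>t\<rceil>)}" using t by (simp add: real_nat_ceiling_ge)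
      then have "D t = 0" using elim by blast
      then show "Y' t = Ysol u \<phi> f a t z" by (simp add: D_def Y_def)
    qed
  qed
qed

end


theorem lemmaA1:
  fixes v :: "real \<Rightarrow> complex ^ 'm2::finite ^ 'm1::finite"
    and u :: "real \<Rightarrow> complex \<Rightarrow> complex ^ ('m1 + 'm2) ^ ('m1 + 'm2)"
    and \<phi> :: "complex \<Rightarrow> complex ^ 'm1 ^ 'm2"
    and f :: "real \<Rightarrow> complex ^ ('m1 + 'm2)"
    and a :: real and z :: complex
  assumes a_pos: "a > 0"
    and v_loc: "\<forall>b\<ge>0. set_integrable lborel {0..b} v"
    and v_supp: "AE x in lborel. x > a \<longrightarrow> v x = 0"
    and u_fund: "fund_sol v u"
    and phi_weyl: "weyl_fun u \<phi>"
    and z_up: "Im z > 0"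
    and f_L2: "L2_on {0<..} f"
    and f_supp: "AE x in lborel. x > a \<longrightarrow> f x = 0"
  shows "L_resolvent_eq v z f (\<lambda>x. Ysol u \<phi> f a x z)
    \<and> (\<forall>Y'. L_resolvent_eq v z f Y' \<longrightarrow> (AE x in lborel. x > 0 \<longrightarrow> Y' x = Ysol u \<phi> f a x z))"
  using existence[OF assms] uniqueness[OF assms] by blast

end
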